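(* Let $(C_\bullet,\partial^C_\bullet)$ be a chain complex in which each $C_n$ is the free abelian group on a finite set $K_n$ (nonempty for only finitely many $n$), and $(G_\bullet,\partial^G_\bullet)$ a chain complex of finite abelian groups, with $\mathrm{hom}^p$, $\mathrm{hom}_p$, $d^p$, $d_p$, $\chi$, $\mathcal H$, $P^\alpha$, $Q_{\hat\beta}$ as in the context. For $\hat\rho\in\mathrm{hom}_{-1}$ and $\omega\in\mathrm{hom}^1$ define the fake-gauge and fake-holonomy operators on $\mathcal H$: $$A_{\hat\rho}=\frac{1}{|\mathrm{hom}^{-1}|}\sum_{\alpha\in\mathrm{hom}^{-1}}\overline{\chi_{\hat\rho}(\alpha)}\,P^{d^{-1}\alpha},\qquad B^{\omega}=\frac{1}{|\mathrm{hom}_{1}|}\sum_{\hat\beta\in\mathrm{hom}_{1}}\overline{\chi_{\hat\beta}(\omega)}\,Q_{d_1\hat\beta}.$$ Then for all $\hat\rho,\hat\rho'\in\mathrm{hom}_{-1}$ and $\omega,\omega'\in\mathrm{hom}^1$: (1) $A_{\hat\rho}B^\omega=B^\omega A_{\hat\rho}$; (2) $A_{\hat\rho}^\dagger=A_{\hat\rho}$ and $(B^\omega)^\dagger=B^\omega$; (3) $A_{\hat\rho}A_{\hat\rho'}=\delta(\hat\rho,\hat\rho')A_{\hat\rho'}$ and $B^\omega B^{\omega'}=\delta(\omega,\omega')B^{\omega'}$; (4) $\sum_{\hat\rho\in\mathrm{hom}_{-1}}A_{\hat\rho}=\mathbb 1_{\mathcal H}$ and $\sum_{\omega\in\mathrm{hom}^1}B^\omega=\mathbb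 1_{\mathcal H}$. In particular, the $A_{\hat\rho}$ and $B^\omega$ are mutually commuting orthogonal projectors.
   Context: $\mathrm{hom}^p=\bigoplus_n\mathrm{Hom}(C_n,G_{n-p})$, $\mathrm{hom}_p=\bigoplus_n\mathrm{Hom}(C_n,\hat G_{n-p})$ with $\hat G_m=\mathrm{Hom}(G_m,U(1))$, abelian groups under pointwise addition. The pairing $\chi_{\hat\rho}(\omega)=\prod_n\prod_{x\in K_n}\hat\rho_n(x)(\omega_n(x))\in U(1)$ for $\hat\rho\in\mathrm{hom}_p,\ \omega\in\mathrm{hom}^p$ is nondegenerate. $d^p:\mathrm{hom}^p\to\mathrm{hom}^{p+1}$ is $(d^p\omega)_n=\omega_{n-1}\circ\partial^C_n-(-1)^p\,\partial^G_{n-p}\circ\omega_n$, and $d_{p+1}:\mathrm{hom}_{p+1}\to\mathrm{hom}_p$ is the unique homomorphism with $\chi_{d_{p+1}\hat\nu}(\omega)=\chi_{\hat\nu}(d^p\omega)$. $\mathcal H$ is the Hilbert space with orthonormal basis $\{|\omega\rangle:\omega\in\mathrm{hom}^0\}$; $P^\alpha|\omega\rangle=|\omega+\alpha\rangle$ for $\alpha\in\mathrm{hom}^0$ and $Q_{\hat\beta}|\omega\rangle=\chi_{\hat\beta}(\omega)|\omega\rangle$ for $\hat\beta\in\mathrm{hom}_0$. $\delta$ is the Kronecker delta and $\dagger$ the Hilbert-space adjoint. *)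

theory Defs
  imports Complex_Main "HOL-Algebra.Algebra"
begin

text \<open>The chain complex C is given by a family of finite bases K n (C_n is the free abelian
  group on K n) and integer boundary coefficients bC n x y, meaning
  boundary_n(x) = sum over y in K (n-1) of (bC n x y) y.
  The complex G is a family of finite commutative groups G n (HOL-Algebra, written
  multiplicatively) with boundary maps bG n : G n -> G (n-1).
  A homomorphism C_n -> G_m is identified with its values on the basis K n
  (universal property of the free abelian group); elements of hom^p are extensional
  families of such maps.\<close>

definition U1 :: "complex monoid" where
  "U1 = \<lparr>carrier = {z. cmod z = 1}, monoid.mult = (*), one = 1\<rparr>"

definition characters :: "('g, 'm) monoid_scheme \<Rightarrow> ('g \<Rightarrow> complex) set" where
  "characters H = {f. f \<in> hom H U1 \<and> f \<in> extensional (carrier H)}"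

definition cochains :: "(int \<Rightarrow> 'k set) \<Rightarrow> (int \<Rightarrow> ('g, 'm) monoid_scheme) \<Rightarrow> int
    \<Rightarrow> (int \<Rightarrow> 'k \<Rightarrow> 'g) set" where
  "cochains K G p = {\<omega>. \<forall>n. \<omega> n \<in> (\<Pi>\<^sub>E x\<in>K n. carrier (G (n - p)))}"

definition hom_low :: "(int \<Rightarrow> 'k set) \<Rightarrow> (int \<Rightarrow> ('g, 'm) monoid_scheme) \<Rightarrow> int
    \<Rightarrow> (int \<Rightarrow> 'k \<Rightarrow> 'g \<Rightarrow> complex) set" where
  "hom_low K G p = {\<rho>. \<forall>n. \<rho> n \<in> (\<Pi>\<^sub>E x\<in>K n. characters (G (n - p)))}"

definition cochain_add :: "(int \<Rightarrow> 'k set) \<Rightarrow> (int \<Rightarrow> ('g, 'm) monoid_scheme) \<Rightarrow> int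
    \<Rightarrow> (int \<Rightarrow> 'k \<Rightarrow> 'g) \<Rightarrow> (int \<Rightarrow> 'k \<Rightarrow> 'g) \<Rightarrow> (int \<Rightarrow> 'k \<Rightarrow> 'g)" where
  "cochain_add K G p \<omega> \<alpha> = (\<lambda>n. \<lambda>x\<in>K n. \<omega> n x \<otimes>\<^bsub>G (n - p)\<^esub> \<alpha> n x)"

definition pairing :: "(int \<Rightarrow> 'k set) \<Rightarrow> (int \<Rightarrow> 'k \<Rightarrow> 'g \<Rightarrow> complex)
    \<Rightarrow> (int \<Rightarrow> 'k \<Rightarrow> 'g) \<Rightarrow> complex" where
  "pairing K \<rho> \<omega> = (\<Prod>n\<in>{n. K n \<noteq> {}}. \<Prod>x\<in>K n. \<rho> n x (\<omega> n x))"

text \<open>Coboundary d^p : hom^p -> hom^(p+1):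
  (d^p w)_n = w_(n-1) o bdC_n - (-1)^p bdG_(n-p) o w_n, evaluated on a basis element x,
  in multiplicative notation; the coefficient -(-1)^p is -1 for even p and 1 for odd p.\<close>
definition cobdry :: "(int \<Rightarrow> 'k set) \<Rightarrow> (int \<Rightarrow> 'k \<Rightarrow> 'k \<Rightarrow> int)
    \<Rightarrow> (int \<Rightarrow> ('g, 'm) monoid_scheme) \<Rightarrow> (int \<Rightarrow> 'g \<Rightarrow> 'g) \<Rightarrow> int
    \<Rightarrow> (int \<Rightarrow> 'k \<Rightarrow> 'g) \<Rightarrow> (int \<Rightarrow> 'k \<Rightarrow> 'g)" where
  "cobdry K bC G bG p \<omega> = (\<lambda>n. \<lambda>x\<in>K n.
      (finprod (G (n - (p + 1))) (\<lambda>y. \<omega> (n - 1) y [^]\<^bsub>G (n - (p + 1))\<^esub> bC n x y) (K (n - 1)))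
      \<otimes>\<^bsub>G (n - (p + 1))\<^esub>
      ((bG (n - p) (\<omega> n x)) [^]\<^bsub>G (n - (p + 1))\<^esub> (if even p then (-1::int) else 1)))"

text \<open>Boundary d_(p+1) : hom_(p+1) -> hom_p, the unique element with
  chi_(d nu)(w) = chi_nu(d^p w) for all w in hom^p.\<close>
definition bdry :: "(int \<Rightarrow> 'k set) \<Rightarrow> (int \<Rightarrow> 'k \<Rightarrow> 'k \<Rightarrow> int)
    \<Rightarrow> (int \<Rightarrow> ('g, 'm) monoid_scheme) \<Rightarrow> (int \<Rightarrow> 'g \<Rightarrow> 'g) \<Rightarrow> int
    \<Rightarrow> (int \<Rightarrow> 'k \<Rightarrow> 'g \<Rightarrow> complex) \<Rightarrow> (int \<Rightarrow> 'k \<Rightarrow> 'g \<Rightarrow> complex)" where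
  "bdry K bC G bG p \<nu> = (THE \<rho>. \<rho> \<in> hom_low K G p \<and>
      (\<forall>\<omega>\<in>cochains K G p. pairing K \<rho> \<omega> = pairing K \<nu> (cobdry K bC G bG p \<omega>)))"

text \<open>Operators on the finite-dimensional Hilbert space with orthonormal basis indexed by
  a finite set H are represented by their matrices M a b = <a|M|b>, vanishing outside H x H.\<close>

definition op_mult :: "'a set \<Rightarrow> ('a \<Rightarrow> 'a \<Rightarrow> complex) \<Rightarrow> ('a \<Rightarrow> 'a \<Rightarrow> complex)
    \<Rightarrow> ('a \<Rightarrow> 'a \<Rightarrow> complex)" where
  "op_mult H M N = (\<lambda>a c. \<Sum>b\<in>H. M a b * N b c)"

definition op_adj :: "('a \<Rightarrow> 'a \<Rightarrow> complex) \<Rightarrow> ('a \<Rightarrow> 'a \<Rightarrow> complex)" where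
  "op_adj M = (\<lambda>a b. cnj (M b a))"

definition op_id :: "'a set \<Rightarrow> ('a \<Rightarrow> 'a \<Rightarrow> complex)" where
  "op_id H = (\<lambda>a b. if a \<in> H \<and> a = b then 1 else 0)"

definition op_zero :: "'a \<Rightarrow> 'a \<Rightarrow> complex" where
  "op_zero = (\<lambda>a b. 0)"

definition shift_op :: "(int \<Rightarrow> 'k set) \<Rightarrow> (int \<Rightarrow> ('g, 'm) monoid_scheme)
    \<Rightarrow> (int \<Rightarrow> 'k \<Rightarrow> 'g) \<Rightarrow> ((int \<Rightarrow> 'k \<Rightarrow> 'g) \<Rightarrow> (int \<Rightarrow> 'k \<Rightarrow> 'g) \<Rightarrow> complex)" where
  "shift_op K G \<alpha> = (\<lambda>a b. if a \<in> cochains K G 0 \<and> b \<in> cochains K G 0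
       \<and> a = cochain_add K G 0 b \<alpha> then 1 else 0)"

definition clock_op :: "(int \<Rightarrow> 'k set) \<Rightarrow> (int \<Rightarrow> ('g, 'm) monoid_scheme)
    \<Rightarrow> (int \<Rightarrow> 'k \<Rightarrow> 'g \<Rightarrow> complex) \<Rightarrow> ((int \<Rightarrow> 'k \<Rightarrow> 'g) \<Rightarrow> (int \<Rightarrow> 'k \<Rightarrow> 'g) \<Rightarrow> complex)" where
  "clock_op K G \<beta> = (\<lambda>a b. if a \<in> cochains K G 0 \<and> a = b then pairing K \<beta> b else 0)"

definition gauge_op :: "(int \<Rightarrow> 'k set) \<Rightarrow> (int \<Rightarrow> 'k \<Rightarrow> 'k \<Rightarrow> int)
    \<Rightarrow> (int \<Rightarrow> ('g, 'm) monoid_scheme) \<Rightarrow> (int \<Rightarrow> 'g \<Rightarrow> 'g)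
    \<Rightarrow> (int \<Rightarrow> 'k \<Rightarrow> 'g \<Rightarrow> complex) \<Rightarrow> ((int \<Rightarrow> 'k \<Rightarrow> 'g) \<Rightarrow> (int \<Rightarrow> 'k \<Rightarrow> 'g) \<Rightarrow> complex)" where
  "gauge_op K bC G bG \<rho> = (\<lambda>a b. (1 / of_nat (card (cochains K G (-1)))) *
      (\<Sum>\<alpha>\<in>cochains K G (-1). cnj (pairing K \<rho> \<alpha>) *
           shift_op K G (cobdry K bC G bG (-1) \<alpha>) a b))"

definition flux_op :: "(int \<Rightarrow> 'k set) \<Rightarrow> (int \<Rightarrow> 'k \<Rightarrow> 'k \<Rightarrow> int)
    \<Rightarrow> (int \<Rightarrow> ('g, 'm) monoid_scheme) \<Rightarrow> (int \<Rightarrow> 'g \<Rightarrow> 'g)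
    \<Rightarrow> (int \<Rightarrow> 'k \<Rightarrow> 'g) \<Rightarrow> ((int \<Rightarrow> 'k \<Rightarrow> 'g) \<Rightarrow> (int \<Rightarrow> 'k \<Rightarrow> 'g) \<Rightarrow> complex)" where
  "flux_op K bC G bG \<omega> = (\<lambda>a b. (1 / of_nat (card (hom_low K G 1))) *
      (\<Sum>\<beta>\<in>hom_low K G 1. cnj (pairing K \<beta> \<omega>) *
           clock_op K G (bdry K bC G bG 0 \<beta>) a b))"

end

theory Submission
  imports Defs
begin

definition ischar :: "('g, 'm) monoid_scheme \<Rightarrow> 'g set \<Rightarrow> ('g \<Rightarrow> complex) \<Rightarrow> bool" where
  "ischar H S f \<longleftrightarrow> (\<forall>x\<in>S. cmod (f x) = 1) \<and> (\<forall>x\<in>S. \<forall>y\<in>S. f (x \<otimes>\<^bsub>H\<^esub> y) = f x * f y)"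

lemma cmod1_cnj_mult: "cmod z = 1 \<Longrightarrow> cnj z * z = 1"
  by (metis divide_conv_cnj mult.commute norm_zero one_eq_divide_iff zero_neq_one)

lemma cmod1_cnj: "cmod z = 1 \<Longrightarrow> cnj z = inverse z"
  using cmod1_cnj_mult[of z] inverse_unique[of z "cnj z"] by (simp add: mult.commute)

context group begin

lemma ischar_one: assumes "subgroup S G" "ischar G S f" shows "f \<one> = 1"
proof -
  have o: "\<one> \<in> S" by (rule subgroup.one_closed[OF assms(1)])
  have "f (\<one> \<otimes> \<one>) = f \<one> * f \<one>" using assms(2) o unfolding ischar_def by blast
  then have eq: "f \<one> = f \<one> * f \<one>" by simp
  have ne: "f \<one> \<noteq> 0" using assms(2) o unfolding ischar_def by force
  have "f \<one> * (f \<one> - 1) = 0" by (simp add: right_diff_distrib eq[symmetric])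
  then show ?thesis using ne by simp
qed

lemma ischar_inv:
  assumes "subgroup S G" "ischar G S f" "x \<in> S"
  shows "f (inv x) = cnj (f x)"
proof -
  have xc: "x \<in> carrier G" by (rule subgroup.mem_carrier[OF assms(1,3)])
  have i: "inv x \<in> S" by (rule subgroup.m_inv_closed[OF assms(1,3)])
  have "f x * f (inv x) = f (x \<otimes> inv x)" using assms(2,3) i unfolding ischar_def by simp
  also have "\<dots> = 1" using ischar_one[OF assms(1,2)] xc by simp
  finally have p: "f x * f (inv x) = 1" .
  have c: "cmod (f x) = 1" using assms(2,3) unfolding ischar_def by simp
  show ?thesis using cmod1_cnj[OF c] inverse_unique[OF p] by simp
qed

lemma subgroup_nat_pow: assumes "subgroup S G" "x \<in> S" shows "x [^] (n::nat) \<in> S"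
proof (induction n)
  case 0
  then show ?case using subgroup.one_closed[OF assms(1)] by simp
next
  case (Suc n)
  then show ?case using subgroup.m_closed[OF assms(1)] assms(2) by (simp add: nat_pow_Suc)
qed

lemma ischar_pow_nat:
  assumes "subgroup S G" "ischar G S f" "x \<in> S"
  shows "f (x [^] (n::nat)) = f x ^ n"
proof (induction n)
  case 0
  then show ?case using ischar_one[OF assms(1,2)] by simp
next
  case (Suc n)
  have "x [^] n \<in> S" using assms(1,3) by (rule subgroup_nat_pow)
  then show ?case using Suc assms(2,3) unfolding ischar_def by (simp add: nat_pow_Suc)
qed

lemma ischar_pow_int:
  assumes "subgroup S G" "ischar G S f" "x \<in> S"
  shows "f (x [^] (k::int)) = f x powi k"
proof (cases "k \<ge> 0")
  case True
  define n where "n = nat k"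
  have k: "k = int n" using True n_def by simp
  have "f (x [^] k) = f (x [^] n)" unfolding k by (rule arg_cong[where f=f], rule int_pow_int)
  also have "\<dots> = f x ^ n" by (rule ischar_pow_nat[OF assms])
  finally show ?thesis unfolding k by simp
next
  case False
  define n where "n = nat (- k)"
  have k: "k = - int n" using False n_def by simp
  have xc: "x \<in> carrier G" by (rule subgroup.mem_carrier[OF assms(1,3)])
  have xn: "x [^] n \<in> S" using assms(1,3) by (rule subgroup_nat_pow)
  have "f (x [^] k) = f (inv (x [^] n))" unfolding k using xc by (simp add: int_pow_neg_int)
  also have "\<dots> = cnj (f (x [^] n))" by (rule ischar_inv[OF assms(1,2) xn])
  also have "\<dots> = cnj (f x ^ n)" by (simp add: ischar_pow_nat[OF assms])
  also have "\<dots> = inverse (f x ^ n)"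
    by (rule cmod1_cnj) (use assms(2,3) in \<open>simp add: ischar_def norm_power\<close>)
  finally show ?thesis unfolding k power_int_minus by simp
qed

end

context comm_group begin

lemma ext_step:
  assumes S: "subgroup S G" and f: "ischar G S f" and g: "g \<in> carrier G"
    and m: "m > 0" "g [^] m \<in> S" "\<And>j. 0 < j \<Longrightarrow> j < m \<Longrightarrow> g [^] j \<notin> S"
    and z: "cmod z = 1" "z ^ m = f (g [^] m)"
  defines "T \<equiv> {s \<otimes> g [^] (k::int) | s k. s \<in> S}"
  shows "subgroup T G \<and> S \<subseteq> T \<and> g \<in> T \<and> (\<exists>f'. ischar G T f' \<and> (\<forall>s\<in>S. f' s = f s) \<and> f' g = z)"
proof -
  have Sc: "\<And>s. s \<in> S \<Longrightarrow> s \<in> carrier G" using subgroup.mem_carrier[OF S] .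
  have z0: "z \<noteq> 0" using z(1) by auto
  have dv: "int m dvd j" if j: "g [^] j \<in> S" for j :: int
  proof -
    define q where "q = j div int m"
    define r where "r = j mod int m"
    have jqr: "j = int m * q + r" unfolding q_def r_def by simp
    have r0: "0 \<le> r" "r < int m" unfolding r_def using m(1) by auto
    have a: "g [^] (int m * q) = (g [^] m) [^] q"
      using int_pow_pow[OF g, of "int m" q] int_pow_int[of G g m] by simp
    have aS: "g [^] (int m * q) \<in> S" unfolding a by (rule subgroup_int_pow_closed[OF S m(2)])
    have "g [^] j = g [^] (int m * q) \<otimes> g [^] r" unfolding jqr by (rule int_pow_mult[OF g])
    then have "g [^] r = inv (g [^] (int m * q)) \<otimes> g [^] j"
      using g by (simp add: inv_solve_left)
    then have rS: "g [^] r \<in> S"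
      using aS j subgroup.m_closed[OF S] subgroup.m_inv_closed[OF S] by simp
    have "g [^] nat r \<in> S" using rS r0 int_pow_int[of G g "nat r"] by simp
    then have "nat r = 0" using m(3)[of "nat r"] r0 by linarith
    then have "r = 0" using r0 by simp
    then show ?thesis using jqr by simp
  qed
  have val: "f (g [^] j) = z powi j" if j: "g [^] j \<in> S" for j :: int
  proof -
    obtain q where q: "j = int m * q" using dv[OF j] by (auto elim: dvdE)
    have a: "g [^] j = (g [^] m) [^] q"
      using int_pow_pow[OF g, of "int m" q] int_pow_int[of G g m] q by simp
    have "f (g [^] j) = f (g [^] m) powi q" unfolding a by (rule ischar_pow_int[OF S f m(2)])
    also have "\<dots> = (z powi int m) powi q" using z(2) by simp
    also have "\<dots> = z powi j" unfolding q by (simp add: power_int_mult)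
    finally show ?thesis .
  qed
  have wd: "f s * z powi k = f s' * z powi k'"
    if s: "s \<in> S" "s' \<in> S" and e: "s \<otimes> g [^] k = s' \<otimes> g [^] k'" for s s' k k'
  proof -
    have sc: "s \<in> carrier G" "s' \<in> carrier G" using s Sc by auto
    have "g [^] k = g [^] (k - k') \<otimes> g [^] k'" using int_pow_mult[OF g, of "k - k'" k'] by simp
    then have "s \<otimes> g [^] (k - k') \<otimes> g [^] k' = s' \<otimes> g [^] k'" using e sc g by (simp add: m_assoc)
    then have "s \<otimes> g [^] (k - k') = s' " using sc g by (simp add: r_cancel)
    then have e2: "g [^] (k - k') = inv s \<otimes> s'" using sc g by (simp add: inv_solve_left)
    have iS: "inv s \<otimes> s' \<in> S" using s subgroup.m_closed[OF S] subgroup.m_inv_closed[OF S] by simp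
    have "z powi (k - k') = f (inv s \<otimes> s')" using val[of "k - k'"] e2 iS by simp
    also have "\<dots> = f (inv s) * f s'" using f iS s subgroup.m_inv_closed[OF S] unfolding ischar_def by simp
    also have "\<dots> = cnj (f s) * f s'" using ischar_inv[OF S f s(1)] by simp
    finally have e3: "z powi (k - k') = cnj (f s) * f s'" .
    have c: "cnj (f s) * f s = 1" using f s unfolding ischar_def by (simp add: cmod1_cnj_mult)
    have "f s * z powi k = f s * (z powi (k - k') * z powi k')" using z0 by (simp add: power_int_diff)
    also have "\<dots> = (cnj (f s) * f s) * f s' * z powi k'" unfolding e3 by (simp add: algebra_simps)
    also have "\<dots> = f s' * z powi k'" using c by simp
    finally show ?thesis .
  qed
  define f' where "f' t = (let p = SOME p. fst p \<in> S \<and> t = fst p \<otimes> g [^] (snd p :: int) in f (fst p) * z powi snd p)" for t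
  have rep: "f' (s \<otimes> g [^] k) = f s * z powi k" if s: "s \<in> S" for s k
  proof -
    define p where "p = (SOME p. fst p \<in> S \<and> s \<otimes> g [^] k = fst p \<otimes> g [^] (snd p :: int))"
    have "\<exists>p. fst p \<in> S \<and> s \<otimes> g [^] k = fst p \<otimes> g [^] (snd p :: int)" using s by (intro exI[of _ "(s, k)"]) simp
    then have p: "fst p \<in> S" "s \<otimes> g [^] k = fst p \<otimes> g [^] (snd p :: int)" unfolding p_def by (metis (mono_tags, lifting) someI_ex)+
    have "f' (s \<otimes> g [^] k) = f (fst p) * z powi snd p" unfolding f'_def p_def Let_def by simp
    also have "\<dots> = f s * z powi k" using wd[OF s p(1) p(2)] by simp
    finally show ?thesis .
  qed
  have Tc: "T \<subseteq> carrier G" unfolding T_def using Sc g by auto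
  have Tmul: "(s \<otimes> g [^] k) \<otimes> (s' \<otimes> g [^] k') = (s \<otimes> s') \<otimes> g [^] (k + k')"
    if "s \<in> carrier G" "s' \<in> carrier G" for s s' and k k' :: int
    using that g by (simp add: int_pow_mult m_ac)
  have subT: "subgroup T G"
  proof (rule subgroupI[OF Tc])
    have "\<one> = \<one> \<otimes> g [^] (0::int)" by simp
    then show "T \<noteq> {}" unfolding T_def using subgroup.one_closed[OF S] by blast
  next
    fix a assume "a \<in> T"
    then obtain s and k :: int where a: "a = s \<otimes> g [^] k" "s \<in> S" unfolding T_def by blast
    have "inv a = inv s \<otimes> g [^] (- k)" using a Sc g by (simp add: inv_mult int_pow_neg)
    then show "inv a \<in> T" unfolding T_def using subgroup.m_inv_closed[OF S a(2)] by blast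
  next
    fix a b assume "a \<in> T" "b \<in> T"
    then obtain s s' and k k' :: int where a: "a = s \<otimes> g [^] k" "s \<in> S" and b: "b = s' \<otimes> g [^] k'" "s' \<in> S"
      unfolding T_def by blast
    have "a \<otimes> b = (s \<otimes> s') \<otimes> g [^] (k + k')" using a b Sc Tmul by simp
    then show "a \<otimes> b \<in> T" unfolding T_def using subgroup.m_closed[OF S a(2) b(2)] by blast
  qed
  have ST: "S \<subseteq> T"
  proof
    fix s assume s: "s \<in> S"
    have "s = s \<otimes> g [^] (0::int)" using Sc[OF s] by simp
    then show "s \<in> T" unfolding T_def using s by blast
  qed
  have gT: "g = \<one> \<otimes> g [^] (1::int)" using g by simp
  have gT': "g \<in> T" unfolding T_def using subgroup.one_closed[OF S] gT by blast
  have chT: "ischar G T f'"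
    unfolding ischar_def
  proof (intro conjI ballI)
    fix t assume "t \<in> T"
    then obtain s and k :: int where t: "t = s \<otimes> g [^] k" "s \<in> S" unfolding T_def by blast
    show "cmod (f' t) = 1" using rep[OF t(2)] f t(2) z(1) unfolding t(1) ischar_def
      by (simp add: norm_mult norm_power_int)
  next
    fix a b assume "a \<in> T" "b \<in> T"
    then obtain s s' and k k' :: int where a: "a = s \<otimes> g [^] k" "s \<in> S" and b: "b = s' \<otimes> g [^] k'" "s' \<in> S"
      unfolding T_def by blast
    have ss: "s \<otimes> s' \<in> S" using subgroup.m_closed[OF S a(2) b(2)] .
    have "f' (a \<otimes> b) = f' ((s \<otimes> s') \<otimes> g [^] (k + k'))" using a b Sc Tmul by simp
    also have "\<dots> = f (s \<otimes> s') * z powi (k + k')" using rep[OF ss] .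
    also have "\<dots> = (f s * z powi k) * (f s' * z powi k')"
      using f a(2) b(2) z0 unfolding ischar_def by (simp add: power_int_add)
    also have "\<dots> = f' a * f' b" using rep a b by simp
    finally show "f' (a \<otimes> b) = f' a * f' b" .
  qed
  have ext: "\<forall>s\<in>S. f' s = f s"
  proof
    fix s assume s: "s \<in> S"
    have "f' (s \<otimes> g [^] (0::int)) = f s" using rep[OF s, of 0] by simp
    then show "f' s = f s" using Sc[OF s] by simp
  qed
  have "f' g = z"
  proof -
    have "f' (\<one> \<otimes> g [^] (1::int)) = f \<one> * z" using rep[OF subgroup.one_closed[OF S], of 1] by simp
    then show ?thesis using gT ischar_one[OF S f] by simp
  qed
  then show ?thesis using subT ST gT' chT ext by blast
qed

end

context comm_group begin

lemma ext_all:
  assumes fin: "finite (carrier G)"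
  shows "subgroup S G \<Longrightarrow> ischar G S f \<Longrightarrow> \<exists>f'. ischar G (carrier G) f' \<and> (\<forall>s\<in>S. f' s = f s)"
proof (induction "card (carrier G - S)" arbitrary: S f rule: less_induct)
  case less
  note S = less.prems(1) and f = less.prems(2)
  show ?case
  proof (cases "S = carrier G")
    case True then show ?thesis using f by auto
  next
    case False
    then obtain g where g: "g \<in> carrier G" "g \<notin> S" using subgroup.subset[OF S] by blast
    have ex: "\<exists>m::nat. 0 < m \<and> g [^] m \<in> S"
      using ord_ge_1[OF fin g(1)] pow_ord_eq_1[OF g(1)] subgroup.one_closed[OF S]
      by (intro exI[of _ "ord g"]) simp
    define m where "m = (LEAST m::nat. 0 < m \<and> g [^] m \<in> S)"
    have m: "0 < m" "g [^] m \<in> S" using LeastI_ex[OF ex] unfolding m_def by auto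
    have mmin: "g [^] j \<notin> S" if "0 < j" "j < m" for j :: nat
      using not_less_Least[of j "\<lambda>m::nat. 0 < m \<and> g [^] m \<in> S"] that unfolding m_def by auto
    define w where "w = f (g [^] m)"
    have w: "cmod w = 1" using f m(2) unfolding w_def ischar_def by simp
    define z where "z = cis (Arg w / real m)"
    have z1: "cmod z = 1" unfolding z_def by simp
    have "z ^ m = cis (Arg w)" unfolding z_def DeMoivre using m(1) by simp
  also have "\<dots> = w" proof - have "w \<noteq> 0" using w by auto then show ?thesis using w cis_Arg[of w] by (simp add: sgn_div_norm) qed
    finally have z2: "z ^ m = f (g [^] m)" unfolding w_def .
    define T where "T = {s \<otimes> g [^] (k::int) | s k. s \<in> S}"
    from ext_step[OF S f g(1) m mmin z1 z2]
    obtain f1 where T: "subgroup T G" "S \<subseteq> T" "g \<in> T" and f1: "ischar G T f1" "\<forall>s\<in>S. f1 s = f s"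
      unfolding T_def[symmetric] by blast
    have "carrier G - T \<subset> carrier G - S" using T g by blast
    then have "card (carrier G - T) < card (carrier G - S)" using fin by (meson finite_Diff psubset_card_mono)
    from less.hyps[OF this T(1) f1(1)] obtain f2 where f2: "ischar G (carrier G) f2" "\<forall>s\<in>T. f2 s = f1 s"
      by blast
    have "\<forall>s\<in>S. f2 s = f s" using f2(2) f1(2) T(2) by auto
    then show ?thesis using f2(1) by blast
  qed
qed

lemma char_sep:
  assumes fin: "finite (carrier G)" and h: "h \<in> carrier G" "h \<noteq> \<one>"
  shows "\<exists>\<chi>\<in>characters G. \<chi> h \<noteq> 1"
proof -
  have S: "subgroup {\<one>} G" by (rule triv_subgroup)
  have f: "ischar G {\<one>} (\<lambda>_. 1)" unfolding ischar_def by simp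
  have ex: "\<exists>m::nat. 0 < m \<and> h [^] m \<in> {\<one>}"
    using ord_ge_1[OF fin h(1)] pow_ord_eq_1[OF h(1)]
    by (intro exI[of _ "ord h"]) simp
  define m where "m = (LEAST m::nat. 0 < m \<and> h [^] m \<in> {\<one>})"
  have m: "0 < m" "h [^] m \<in> {\<one>}" using LeastI_ex[OF ex] unfolding m_def by auto
  have mmin: "h [^] j \<notin> {\<one>}" if "0 < j" "j < m" for j :: nat
    using not_less_Least[of j "\<lambda>m::nat. 0 < m \<and> h [^] m \<in> {\<one>}"] that unfolding m_def by auto
  have m1: "m \<noteq> 1" using m(2) h by auto
  define z where "z = cis (2 * pi / real m)"
  have z1: "cmod z = 1" unfolding z_def by simp
  have "z ^ m = cis (2 * pi)" unfolding z_def DeMoivre using m(1) by simp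
  then have z2: "z ^ m = (\<lambda>_. 1) (h [^] m)" by simp
  have zn1: "z \<noteq> 1"
  proof
    assume "z = 1"
    then have c: "cos (2 * pi / real m) = 1" unfolding z_def using cis.sel(1)[of "2 * pi / real m"] by simp
    have m2: "real m \<ge> 2" using m(1) m1 by linarith
    have a1: "0 < 2 * pi / real m" using m(1) by simp
    have a2: "2 * pi / real m \<le> pi" using m2 by (simp add: divide_le_eq)
    have "cos (2 * pi / real m) < cos 0" by (rule cos_monotone_0_pi) (use a1 a2 in auto)
    then show False using c by simp
  qed
  define T where "T = {s \<otimes> h [^] (k::int) | s k. s \<in> {\<one>}}"
  from ext_step[OF S f h(1) m mmin z1 z2]
  obtain f1 where T: "subgroup T G" "h \<in> T" and f1: "ischar G T f1" "f1 h = z"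
    unfolding T_def[symmetric] by blast
  from ext_all[OF fin T(1) f1(1)] obtain f' where f': "ischar G (carrier G) f'" "\<forall>s\<in>T. f' s = f1 s"
    by blast
  define \<chi> where "\<chi> = restrict f' (carrier G)"
  have "\<chi> \<in> characters G"
    unfolding characters_def hom_def U1_def \<chi>_def using f' unfolding ischar_def by auto
  moreover have "\<chi> h \<noteq> 1" using f' T(2) f1(2) zn1 h(1) unfolding \<chi>_def by simp
  ultimately show ?thesis by blast
qed

end

lemma char_ischar: "group H \<Longrightarrow> \<chi> \<in> characters H \<Longrightarrow> ischar H (carrier H) \<chi>"
  unfolding characters_def hom_def U1_def ischar_def by auto

lemma char_one: assumes "group H" "\<chi> \<in> characters H" shows "\<chi> \<one>\<^bsub>H\<^esub> = 1"
  by (rule group.ischar_one[OF assms(1) group.subgroup_self[OF assms(1)] char_ischar[OF assms]])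

lemma char_mult: "\<chi> \<in> characters H \<Longrightarrow> a \<in> carrier H \<Longrightarrow> b \<in> carrier H \<Longrightarrow>
    \<chi> (a \<otimes>\<^bsub>H\<^esub> b) = \<chi> a * \<chi> b"
  unfolding characters_def hom_def U1_def by auto

lemma char_norm: "\<chi> \<in> characters H \<Longrightarrow> a \<in> carrier H \<Longrightarrow> cmod (\<chi> a) = 1"
  unfolding characters_def hom_def U1_def by auto

lemma char_out: "\<chi> \<in> characters H \<Longrightarrow> a \<notin> carrier H \<Longrightarrow> \<chi> a = undefined"
  unfolding characters_def extensional_def by auto

lemma char_inv: assumes "group H" "\<chi> \<in> characters H" "a \<in> carrier H" shows "\<chi> (inv\<^bsub>H\<^esub> a) = cnj (\<chi> a)"
  by (rule group.ischar_inv[OF assms(1) group.subgroup_self[OF assms(1)] char_ischar[OF assms(1,2)] assms(3)])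

lemma char_pow: assumes "group H" "\<chi> \<in> characters H" "a \<in> carrier H" shows "\<chi> (a [^]\<^bsub>H\<^esub> (k::int)) = \<chi> a powi k"
  by (rule group.ischar_pow_int[OF assms(1) group.subgroup_self[OF assms(1)] char_ischar[OF assms(1,2)] assms(3)])

lemma char_finprod:
  assumes "comm_group H" "\<chi> \<in> characters H" "finite A" "f \<in> A \<rightarrow> carrier H"
  shows "\<chi> (finprod H f A) = (\<Prod>a\<in>A. \<chi> (f a))"
  using assms(3,4)
proof (induction A rule: finite_induct)
  case empty
  then show ?case using char_one[OF comm_group.axioms(2)[OF assms(1)] assms(2)]
    by (simp add: comm_monoid.finprod_empty[OF comm_group.axioms(1)[OF assms(1)]])
next
  case (insert x F)
  interpret comm_group H by fact
  have "finprod H f (insert x F) = f x \<otimes>\<^bsub>H\<^esub> finprod H f F"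
    using insert by (simp add: finprod_insert)
  then show ?case using insert char_mult[OF assms(2)] finprod_closed[of f F] by simp
qed

lemma characters_finite:
  assumes "group H" "finite (carrier H)"
  shows "finite (characters H)"
proof -
  define N where "N = order H"
  have "\<one>\<^bsub>H\<^esub> \<in> carrier H" using group.is_monoid[OF assms(1)] by (rule monoid.one_closed)
  then have N: "N \<ge> 1" using assms(2) unfolding N_def order_def
    by (metis One_nat_def Suc_leI card_gt_0_iff empty_iff)
  have "characters H \<subseteq> PiE (carrier H) (\<lambda>_. {z. z ^ N = 1})"
  proof
    fix \<chi> assume c: "\<chi> \<in> characters H"
    have "\<chi> a ^ N = 1" if a: "a \<in> carrier H" for a
    proof -
      have "\<chi> (a [^]\<^bsub>H\<^esub> (int N)) = 1" using group.pow_order_eq_1[OF assms(1) a] char_one[OF assms(1) c]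
        unfolding N_def by (simp add: int_pow_int)
      then show ?thesis using char_pow[OF assms(1) c a, of "int N"] by simp
    qed
    then show "\<chi> \<in> PiE (carrier H) (\<lambda>_. {z. z ^ N = 1})" using c unfolding characters_def
      by (auto simp: PiE_iff)
  qed
  moreover have "finite (PiE (carrier H) (\<lambda>_. {z::complex. z ^ N = 1}))"
    using assms(2) finite_roots_unity[OF N] by (auto intro!: finite_PiE)
  ultimately show ?thesis by (rule finite_subset)
qed

definition czero :: "(int \<Rightarrow> 'k set) \<Rightarrow> (int \<Rightarrow> ('g, 'm) monoid_scheme) \<Rightarrow> int \<Rightarrow> (int \<Rightarrow> 'k \<Rightarrow> 'g)" where
  "czero K G p = (\<lambda>n. \<lambda>x\<in>K n. \<one>\<^bsub>G (n - p)\<^esub>)"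

definition CG :: "(int \<Rightarrow> 'k set) \<Rightarrow> (int \<Rightarrow> ('g, 'm) monoid_scheme) \<Rightarrow> int \<Rightarrow> (int \<Rightarrow> 'k \<Rightarrow> 'g) monoid" where
  "CG K G p = \<lparr>carrier = cochains K G p, monoid.mult = cochain_add K G p, one = czero K G p\<rparr>"

definition rone :: "(int \<Rightarrow> 'k set) \<Rightarrow> (int \<Rightarrow> ('g, 'm) monoid_scheme) \<Rightarrow> int \<Rightarrow> (int \<Rightarrow> 'k \<Rightarrow> 'g \<Rightarrow> complex)" where
  "rone K G p = (\<lambda>n. \<lambda>x\<in>K n. \<lambda>g\<in>carrier (G (n - p)). 1)"

definition rmul :: "(int \<Rightarrow> 'k set) \<Rightarrow> (int \<Rightarrow> ('g, 'm) monoid_scheme) \<Rightarrow> int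
   \<Rightarrow> (int \<Rightarrow> 'k \<Rightarrow> 'g \<Rightarrow> complex) \<Rightarrow> (int \<Rightarrow> 'k \<Rightarrow> 'g \<Rightarrow> complex) \<Rightarrow> (int \<Rightarrow> 'k \<Rightarrow> 'g \<Rightarrow> complex)" where
  "rmul K G p r r' = (\<lambda>n. \<lambda>x\<in>K n. \<lambda>g\<in>carrier (G (n - p)). r n x g * r' n x g)"

definition DG :: "(int \<Rightarrow> 'k set) \<Rightarrow> (int \<Rightarrow> ('g, 'm) monoid_scheme) \<Rightarrow> int \<Rightarrow> (int \<Rightarrow> 'k \<Rightarrow> 'g \<Rightarrow> complex) monoid" where
  "DG K G p = \<lparr>carrier = hom_low K G p, monoid.mult = rmul K G p, one = rone K G p\<rparr>"

locale cx =
  fixes K :: "int \<Rightarrow> 'k set" and G :: "int \<Rightarrow> ('g, 'm) monoid_scheme"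
  assumes K_fin: "\<And>n. finite (K n)" and K_supp: "finite {n. K n \<noteq> {}}"
    and G_grp: "\<And>n. comm_group (G n)" and G_fin: "\<And>n. finite (carrier (G n))"
begin

lemma grp: "group (G n)" using G_grp comm_group.axioms(2) by blast
lemma cmon: "comm_monoid (G n)" using G_grp comm_group.axioms(1) by blast

lemma coch_val: "\<omega> \<in> cochains K G p \<Longrightarrow> x \<in> K n \<Longrightarrow> \<omega> n x \<in> carrier (G (n - p))"
  unfolding cochains_def by (auto simp: PiE_iff)

lemma coch_out: "\<omega> \<in> cochains K G p \<Longrightarrow> x \<notin> K n \<Longrightarrow> \<omega> n x = undefined"
  unfolding cochains_def by (auto simp: PiE_iff extensional_def)

lemma coch_memI: "(\<And>n x. x \<in> K n \<Longrightarrow> \<omega> n x \<in> carrier (G (n - p))) \<Longrightarrow>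
    (\<And>n x. x \<notin> K n \<Longrightarrow> \<omega> n x = undefined) \<Longrightarrow> \<omega> \<in> cochains K G p"
  unfolding cochains_def by (auto simp: PiE_iff extensional_def)

lemma coch_eqI: "\<omega> \<in> cochains K G p \<Longrightarrow> \<alpha> \<in> cochains K G p \<Longrightarrow>
    (\<And>n x. x \<in> K n \<Longrightarrow> \<omega> n x = \<alpha> n x) \<Longrightarrow> \<omega> = \<alpha>"
  using coch_out by (intro ext) (metis)

lemma add_val: "x \<in> K n \<Longrightarrow> cochain_add K G p \<omega> \<alpha> n x = \<omega> n x \<otimes>\<^bsub>G (n - p)\<^esub> \<alpha> n x"
  unfolding cochain_add_def by simp

lemma czero_val: "x \<in> K n \<Longrightarrow> czero K G p n x = \<one>\<^bsub>G (n - p)\<^esub>"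
  unfolding czero_def by simp

lemma add_mem: "\<omega> \<in> cochains K G p \<Longrightarrow> \<alpha> \<in> cochains K G p \<Longrightarrow> cochain_add K G p \<omega> \<alpha> \<in> cochains K G p"
  by (rule coch_memI) (auto simp: add_val coch_val monoid.m_closed[OF group.is_monoid[OF grp]] cochain_add_def)

lemma czero_mem: "czero K G p \<in> cochains K G p"
  by (rule coch_memI) (auto simp: czero_def monoid.one_closed[OF group.is_monoid[OF grp]])

lemma CG_group: "comm_group (CG K G p)"
proof (rule comm_groupI)
  fix x y assume "x \<in> carrier (CG K G p)" "y \<in> carrier (CG K G p)"
  then show "x \<otimes>\<^bsub>CG K G p\<^esub> y \<in> carrier (CG K G p)" unfolding CG_def using add_mem by simp
next
  show "\<one>\<^bsub>CG K G p\<^esub> \<in> carrier (CG K G p)" unfolding CG_def using czero_mem by simp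
next
  fix x y z assume a: "x \<in> carrier (CG K G p)" "y \<in> carrier (CG K G p)" "z \<in> carrier (CG K G p)"
  show "x \<otimes>\<^bsub>CG K G p\<^esub> y \<otimes>\<^bsub>CG K G p\<^esub> z = x \<otimes>\<^bsub>CG K G p\<^esub> (y \<otimes>\<^bsub>CG K G p\<^esub> z)"
    using a unfolding CG_def
    by (simp, intro coch_eqI[where p=p] add_mem)
       (auto simp: add_val coch_val monoid.m_assoc[OF group.is_monoid[OF grp]])
next
  fix x y assume a: "x \<in> carrier (CG K G p)" "y \<in> carrier (CG K G p)"
  show "x \<otimes>\<^bsub>CG K G p\<^esub> y = y \<otimes>\<^bsub>CG K G p\<^esub> x"
    using a unfolding CG_def
    by (simp, intro coch_eqI[where p=p] add_mem)
       (auto simp: add_val coch_val comm_monoid.m_comm[OF cmon])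
next
  fix x assume a: "x \<in> carrier (CG K G p)"
  show "\<one>\<^bsub>CG K G p\<^esub> \<otimes>\<^bsub>CG K G p\<^esub> x = x"
    using a unfolding CG_def
    by (simp, intro coch_eqI[where p=p] add_mem czero_mem)
       (auto simp: add_val czero_val coch_val monoid.l_one[OF group.is_monoid[OF grp]])
next
  fix x assume a: "x \<in> carrier (CG K G p)"
  define y where "y = (\<lambda>n. \<lambda>i\<in>K n. inv\<^bsub>G (n - p)\<^esub> (x n i))"
  have y: "y \<in> cochains K G p" using a unfolding CG_def
    by (intro coch_memI) (auto simp: y_def coch_val group.inv_closed[OF grp])
  have "y \<otimes>\<^bsub>CG K G p\<^esub> x = \<one>\<^bsub>CG K G p\<^esub>"
    using a y unfolding CG_def
    by (simp, intro coch_eqI[where p=p] add_mem czero_mem)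
       (auto simp: add_val czero_val coch_val y_def group.l_inv[OF grp])
  then show "\<exists>y\<in>carrier (CG K G p). y \<otimes>\<^bsub>CG K G p\<^esub> x = \<one>\<^bsub>CG K G p\<^esub>"
    using y unfolding CG_def by auto
qed

lemma CG_simps: "carrier (CG K G p) = cochains K G p" "monoid.mult (CG K G p) = cochain_add K G p"
  "one (CG K G p) = czero K G p"
  unfolding CG_def by simp_all

definition NN where "NN = {n. K n \<noteq> {}}"

lemma coch_finite: "finite (cochains K G p)"
proof -
  have inj: "inj_on (\<lambda>\<omega>. restrict \<omega> NN) (cochains K G p)"
  proof (rule inj_onI)
    fix \<omega> \<alpha> assume a: "\<omega> \<in> cochains K G p" "\<alpha> \<in> cochains K G p" "restrict \<omega> NN = restrict \<alpha> NN"
    show "\<omega> = \<alpha>"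
    proof (rule coch_eqI[OF a(1,2)])
      fix n x assume x: "x \<in> K n"
      then have "n \<in> NN" unfolding NN_def by auto
      then have "\<omega> n = \<alpha> n" using a(3) by (metis restrict_apply')
      then show "\<omega> n x = \<alpha> n x" by simp
    qed
  qed
  have sub: "(\<lambda>\<omega>. restrict \<omega> NN) ` cochains K G p \<subseteq> PiE NN (\<lambda>n. PiE (K n) (\<lambda>x. carrier (G (n - p))))"
  proof (rule image_subsetI)
    fix \<omega> assume "\<omega> \<in> cochains K G p"
    then show "restrict \<omega> NN \<in> PiE NN (\<lambda>n. PiE (K n) (\<lambda>x. carrier (G (n - p))))"
      unfolding cochains_def restrict_PiE_iff by blast
  qed
  have "finite (PiE NN (\<lambda>n. PiE (K n) (\<lambda>x. carrier (G (n - p)))))"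
    using K_supp K_fin G_fin unfolding NN_def by (auto intro!: finite_PiE)
  then show ?thesis using finite_imageD[OF finite_subset[OF sub] inj] by blast
qed

end

lemma triv_char: "group H \<Longrightarrow> (\<lambda>g\<in>carrier H. 1) \<in> characters H"
  unfolding characters_def hom_def U1_def by (auto simp: group.is_monoid monoid.m_closed)

lemma mul_char: "group H \<Longrightarrow> \<chi> \<in> characters H \<Longrightarrow> \<chi>' \<in> characters H \<Longrightarrow>
    (\<lambda>g\<in>carrier H. \<chi> g * \<chi>' g) \<in> characters H"
  unfolding characters_def hom_def U1_def by (auto simp: group.is_monoid monoid.m_closed norm_mult Pi_iff)

lemma cnj_char: "group H \<Longrightarrow> \<chi> \<in> characters H \<Longrightarrow> (\<lambda>g\<in>carrier H. cnj (\<chi> g)) \<in> characters H"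
  unfolding characters_def hom_def U1_def by (auto simp: group.is_monoid monoid.m_closed)

context cx begin

lemma hl_val: "\<rho> \<in> hom_low K G p \<Longrightarrow> x \<in> K n \<Longrightarrow> \<rho> n x \<in> characters (G (n - p))"
  unfolding hom_low_def by (auto simp: PiE_iff)

lemma hl_out: "\<rho> \<in> hom_low K G p \<Longrightarrow> x \<notin> K n \<Longrightarrow> \<rho> n x = undefined"
  unfolding hom_low_def by (auto simp: PiE_iff extensional_def)

lemma hl_norm: "\<rho> \<in> hom_low K G p \<Longrightarrow> x \<in> K n \<Longrightarrow> g \<in> carrier (G (n - p)) \<Longrightarrow> cmod (\<rho> n x g) = 1"
  by (rule char_norm[OF hl_val])

lemma hl_memI: "(\<And>n x. x \<in> K n \<Longrightarrow> \<rho> n x \<in> characters (G (n - p))) \<Longrightarrow>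
    (\<And>n x. x \<notin> K n \<Longrightarrow> \<rho> n x = undefined) \<Longrightarrow> \<rho> \<in> hom_low K G p"
  unfolding hom_low_def by (auto simp: PiE_iff extensional_def)

lemma hl_eqI:
  assumes "\<rho> \<in> hom_low K G p" "\<rho>' \<in> hom_low K G p"
    "\<And>n x g. x \<in> K n \<Longrightarrow> g \<in> carrier (G (n - p)) \<Longrightarrow> \<rho> n x g = \<rho>' n x g"
  shows "\<rho> = \<rho>'"
proof (intro ext)
  fix n x g
  show "\<rho> n x g = \<rho>' n x g"
  proof (cases "x \<in> K n")
    case True
    then show ?thesis using assms char_out[OF hl_val[OF assms(1) True]] char_out[OF hl_val[OF assms(2) True]]
      by (cases "g \<in> carrier (G (n - p))") auto
  next
    case False
    then show ?thesis using hl_out assms(1,2) by metis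
  qed
qed

lemma rmul_mem: "\<rho> \<in> hom_low K G p \<Longrightarrow> \<rho>' \<in> hom_low K G p \<Longrightarrow> rmul K G p \<rho> \<rho>' \<in> hom_low K G p"
  by (rule hl_memI) (auto simp: rmul_def hl_val mul_char[OF grp])

lemma rone_mem: "rone K G p \<in> hom_low K G p"
  by (rule hl_memI) (auto simp: rone_def triv_char[OF grp])

lemma DG_group: "comm_group (DG K G p)"
proof (rule comm_groupI)
  fix x y assume "x \<in> carrier (DG K G p)" "y \<in> carrier (DG K G p)"
  then show "x \<otimes>\<^bsub>DG K G p\<^esub> y \<in> carrier (DG K G p)" unfolding DG_def using rmul_mem by simp
next
  show "\<one>\<^bsub>DG K G p\<^esub> \<in> carrier (DG K G p)" unfolding DG_def using rone_mem by simp
next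
  fix x y z assume a: "x \<in> carrier (DG K G p)" "y \<in> carrier (DG K G p)" "z \<in> carrier (DG K G p)"
  show "x \<otimes>\<^bsub>DG K G p\<^esub> y \<otimes>\<^bsub>DG K G p\<^esub> z = x \<otimes>\<^bsub>DG K G p\<^esub> (y \<otimes>\<^bsub>DG K G p\<^esub> z)"
    using a unfolding DG_def
    by (simp, intro hl_eqI[where p=p] rmul_mem) (auto simp: rmul_def)
next
  fix x y assume a: "x \<in> carrier (DG K G p)" "y \<in> carrier (DG K G p)"
  show "x \<otimes>\<^bsub>DG K G p\<^esub> y = y \<otimes>\<^bsub>DG K G p\<^esub> x"
    using a unfolding DG_def
    by (simp, intro hl_eqI[where p=p] rmul_mem) (auto simp: rmul_def)
next
  fix x assume a: "x \<in> carrier (DG K G p)"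
  show "\<one>\<^bsub>DG K G p\<^esub> \<otimes>\<^bsub>DG K G p\<^esub> x = x"
    using a unfolding DG_def
    by (simp, intro hl_eqI[where p=p] rmul_mem rone_mem) (auto simp: rmul_def rone_def)
next
  fix x assume a: "x \<in> carrier (DG K G p)"
  define y where "y = (\<lambda>n. \<lambda>i\<in>K n. \<lambda>g\<in>carrier (G (n - p)). cnj (x n i g))"
  have y: "y \<in> hom_low K G p" using a unfolding DG_def
    by (intro hl_memI) (auto simp: y_def hl_val cnj_char[OF grp])
  have "y \<otimes>\<^bsub>DG K G p\<^esub> x = \<one>\<^bsub>DG K G p\<^esub>"
    using a y unfolding DG_def
    by (simp, intro hl_eqI[where p=p] rmul_mem rone_mem)
       (auto simp: rmul_def rone_def y_def cmod1_cnj_mult hl_norm)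
  then show "\<exists>y\<in>carrier (DG K G p). y \<otimes>\<^bsub>DG K G p\<^esub> x = \<one>\<^bsub>DG K G p\<^esub>"
    using y unfolding DG_def by auto
qed

lemma DG_simps: "carrier (DG K G p) = hom_low K G p" "monoid.mult (DG K G p) = rmul K G p"
  "one (DG K G p) = rone K G p"
  unfolding DG_def by simp_all

lemma hl_finite: "finite (hom_low K G p)"
proof -
  have inj: "inj_on (\<lambda>\<omega>. restrict \<omega> NN) (hom_low K G p)"
  proof (rule inj_onI)
    fix \<omega> \<alpha> assume a: "\<omega> \<in> hom_low K G p" "\<alpha> \<in> hom_low K G p" "restrict \<omega> NN = restrict \<alpha> NN"
    show "\<omega> = \<alpha>"
    proof (rule hl_eqI[OF a(1,2)])
      fix n x g assume x: "x \<in> K n"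
      then have "n \<in> NN" unfolding NN_def by auto
      then have "\<omega> n = \<alpha> n" using a(3) by (metis restrict_apply')
      then show "\<omega> n x g = \<alpha> n x g" by simp
    qed
  qed
  have sub: "(\<lambda>\<omega>. restrict \<omega> NN) ` hom_low K G p \<subseteq> PiE NN (\<lambda>n. PiE (K n) (\<lambda>x. characters (G (n - p))))"
  proof (rule image_subsetI)
    fix \<omega> assume "\<omega> \<in> hom_low K G p"
    then show "restrict \<omega> NN \<in> PiE NN (\<lambda>n. PiE (K n) (\<lambda>x. characters (G (n - p))))"
      unfolding hom_low_def restrict_PiE_iff by blast
  qed
  have "finite (PiE NN (\<lambda>n. PiE (K n) (\<lambda>x. characters (G (n - p)))))"
    using K_supp K_fin characters_finite[OF grp G_fin] unfolding NN_def by (auto intro!: finite_PiE)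
  then show ?thesis using finite_imageD[OF finite_subset[OF sub] inj] by blast
qed

lemma NN_fin: "finite NN" using K_supp unfolding NN_def .

lemma pairing_NN: "pairing K \<rho> \<omega> = (\<Prod>n\<in>NN. \<Prod>x\<in>K n. \<rho> n x (\<omega> n x))"
  unfolding pairing_def NN_def ..

lemma pairing_add:
  assumes "\<rho> \<in> hom_low K G p" "\<omega> \<in> cochains K G p" "\<alpha> \<in> cochains K G p"
  shows "pairing K \<rho> (cochain_add K G p \<omega> \<alpha>) = pairing K \<rho> \<omega> * pairing K \<rho> \<alpha>"
proof -
  have "pairing K \<rho> (cochain_add K G p \<omega> \<alpha>) = (\<Prod>n\<in>NN. \<Prod>x\<in>K n. \<rho> n x (\<omega> n x) * \<rho> n x (\<alpha> n x))"
    unfolding pairing_NN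
    by (intro prod.cong refl) (simp add: add_val char_mult hl_val coch_val assms)
  also have "\<dots> = pairing K \<rho> \<omega> * pairing K \<rho> \<alpha>" unfolding pairing_NN by (simp add: prod.distrib)
  finally show ?thesis .
qed

lemma pairing_rmul:
  assumes "\<rho> \<in> hom_low K G p" "\<rho>' \<in> hom_low K G p" "\<omega> \<in> cochains K G p"
  shows "pairing K (rmul K G p \<rho> \<rho>') \<omega> = pairing K \<rho> \<omega> * pairing K \<rho>' \<omega>"
proof -
  have "pairing K (rmul K G p \<rho> \<rho>') \<omega> = (\<Prod>n\<in>NN. \<Prod>x\<in>K n. \<rho> n x (\<omega> n x) * \<rho>' n x (\<omega> n x))"
    unfolding pairing_NN
    by (intro prod.cong refl) (simp add: rmul_def coch_val assms)
  also have "\<dots> = pairing K \<rho> \<omega> * pairing K \<rho>' \<omega>" unfolding pairing_NN by (simp add: prod.distrib)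
  finally show ?thesis .
qed

lemma pairing_norm:
  assumes "\<rho> \<in> hom_low K G p" "\<omega> \<in> cochains K G p"
  shows "cmod (pairing K \<rho> \<omega>) = 1"
proof -
  have "cmod (\<rho> n x (\<omega> n x)) = 1" if "x \<in> K n" for n x
    using hl_norm[OF assms(1) that coch_val[OF assms(2) that]] .
  then show ?thesis unfolding pairing_NN prod_norm[symmetric]
    by (intro prod.neutral ballI) (simp add: prod_norm[symmetric])
qed

lemma ischar_CG: "\<rho> \<in> hom_low K G p \<Longrightarrow> ischar (CG K G p) (cochains K G p) (pairing K \<rho>)"
  unfolding ischar_def CG_simps using pairing_add pairing_norm by simp

lemma ischar_DG: "\<omega> \<in> cochains K G p \<Longrightarrow> ischar (DG K G p) (hom_low K G p) (\<lambda>\<rho>. pairing K \<rho> \<omega>)"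
  unfolding ischar_def DG_simps using pairing_rmul pairing_norm by simp

lemma pairing_czero: "\<rho> \<in> hom_low K G p \<Longrightarrow> pairing K \<rho> (czero K G p) = 1"
  using group.ischar_one[OF comm_group.axioms(2)[OF CG_group] group.subgroup_self[OF comm_group.axioms(2)[OF CG_group]]]
    ischar_CG CG_simps by metis

lemma pairing_rone: "\<omega> \<in> cochains K G p \<Longrightarrow> pairing K (rone K G p) \<omega> = 1"
  using group.ischar_one[OF comm_group.axioms(2)[OF DG_group] group.subgroup_self[OF comm_group.axioms(2)[OF DG_group]]]
    ischar_DG DG_simps by metis

end

lemma grp_inv_eq:
  assumes "group \<Gamma>" "a \<in> carrier \<Gamma>" "b \<in> carrier \<Gamma>"
  shows "(inv\<^bsub>\<Gamma>\<^esub> a \<otimes>\<^bsub>\<Gamma>\<^esub> b = \<one>\<^bsub>\<Gamma>\<^esub>) \<longleftrightarrow> a = b"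
proof -
  interpret group \<Gamma> by fact
  show ?thesis
  proof
    assume "inv\<^bsub>\<Gamma>\<^esub> a \<otimes>\<^bsub>\<Gamma>\<^esub> b = \<one>\<^bsub>\<Gamma>\<^esub>"
    then have "a \<otimes>\<^bsub>\<Gamma>\<^esub> (inv\<^bsub>\<Gamma>\<^esub> a \<otimes>\<^bsub>\<Gamma>\<^esub> b) = a" using assms by simp
    then show "a = b" using assms by (simp add: m_assoc[symmetric])
  next
    assume "a = b" then show "inv\<^bsub>\<Gamma>\<^esub> a \<otimes>\<^bsub>\<Gamma>\<^esub> b = \<one>\<^bsub>\<Gamma>\<^esub>" using assms by simp
  qed
qed

lemma char_sum_zero:
  assumes "comm_group \<Gamma>" "ischar \<Gamma> (carrier \<Gamma>) f" "a \<in> carrier \<Gamma>" "f a \<noteq> 1"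
  shows "(\<Sum>x\<in>carrier \<Gamma>. f x) = 0"
proof -
  interpret comm_group \<Gamma> by fact
  have "(\<Sum>x\<in>carrier \<Gamma>. f (a \<otimes>\<^bsub>\<Gamma>\<^esub> x)) = (\<Sum>x\<in>carrier \<Gamma>. f x)"
    by (rule sum.reindex_bij_witness[where j="\<lambda>x. a \<otimes>\<^bsub>\<Gamma>\<^esub> x" and i="\<lambda>x. inv\<^bsub>\<Gamma>\<^esub> a \<otimes>\<^bsub>\<Gamma>\<^esub> x"])
       (use assms(3) in \<open>auto simp: m_assoc[symmetric]\<close>)
  moreover have "(\<Sum>x\<in>carrier \<Gamma>. f (a \<otimes>\<^bsub>\<Gamma>\<^esub> x)) = f a * (\<Sum>x\<in>carrier \<Gamma>. f x)"
    using assms(2,3) unfolding ischar_def by (simp add: sum_distrib_left)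
  ultimately have "(1 - f a) * (\<Sum>x\<in>carrier \<Gamma>. f x) = 0" by (simp add: algebra_simps)
  then show ?thesis using assms(4) by simp
qed

context cx begin

lemma G_one: "\<one>\<^bsub>G n\<^esub> \<in> carrier (G n)"
  using monoid.one_closed[OF group.is_monoid[OF grp]] .

lemma pairing_single:
  assumes x0: "x0 \<in> K n0" and oth: "\<And>n x. x \<in> K n \<Longrightarrow> (n, x) \<noteq> (n0, x0) \<Longrightarrow> \<rho> n x (\<omega> n x) = 1"
  shows "pairing K \<rho> \<omega> = \<rho> n0 x0 (\<omega> n0 x0)"
proof -
  have n0: "n0 \<in> NN" using x0 unfolding NN_def by auto
  have "pairing K \<rho> \<omega> = (\<Prod>x\<in>K n0. \<rho> n0 x (\<omega> n0 x)) * (\<Prod>n\<in>NN - {n0}. \<Prod>x\<in>K n. \<rho> n x (\<omega> n x))"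
    unfolding pairing_NN using prod.remove[OF NN_fin n0] by simp
  also have "(\<Prod>n\<in>NN - {n0}. \<Prod>x\<in>K n. \<rho> n x (\<omega> n x)) = 1"
    using oth by (intro prod.neutral ballI) auto
  also have "(\<Prod>x\<in>K n0. \<rho> n0 x (\<omega> n0 x)) = \<rho> n0 x0 (\<omega> n0 x0) * (\<Prod>x\<in>K n0 - {x0}. \<rho> n0 x (\<omega> n0 x))"
    using prod.remove[OF K_fin x0] by simp
  also have "(\<Prod>x\<in>K n0 - {x0}. \<rho> n0 x (\<omega> n0 x)) = 1"
    using oth by (intro prod.neutral ballI) auto
  finally show ?thesis by simp
qed

lemma nondeg_hl:
  assumes "\<rho> \<in> hom_low K G p" "\<rho>' \<in> hom_low K G p" "\<rho> \<noteq> \<rho>'"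
  shows "\<exists>\<omega>\<in>cochains K G p. pairing K \<rho> \<omega> \<noteq> pairing K \<rho>' \<omega>"
proof -
  obtain n x g where x: "x \<in> K n" "g \<in> carrier (G (n - p))" "\<rho> n x g \<noteq> \<rho>' n x g"
    using hl_eqI[OF assms(1,2)] assms(3) by blast
  define \<omega> where "\<omega> = (\<lambda>m. \<lambda>y\<in>K m. if m = n \<and> y = x then g else \<one>\<^bsub>G (m - p)\<^esub>)"
  have \<omega>: "\<omega> \<in> cochains K G p" by (rule coch_memI) (auto simp: \<omega>_def x G_one)
  have e: "pairing K r \<omega> = r n x g" if r: "r \<in> hom_low K G p" for r
  proof -
    have "pairing K r \<omega> = r n x (\<omega> n x)"
    proof (rule pairing_single[OF x(1)])
      fix m y assume y: "y \<in> K m" "(m, y) \<noteq> (n, x)"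
      then have "\<omega> m y = \<one>\<^bsub>G (m - p)\<^esub>" unfolding \<omega>_def by auto
      then show "r m y (\<omega> m y) = 1" using char_one[OF grp hl_val[OF r y(1)]] by simp
    qed
    then show ?thesis unfolding \<omega>_def using x by simp
  qed
  show ?thesis using e[OF assms(1)] e[OF assms(2)] x(3) by (intro bexI[OF _ \<omega>]) simp
qed

lemma sep_coch:
  assumes "\<omega> \<in> cochains K G p" "\<omega> \<noteq> czero K G p"
  shows "\<exists>\<rho>\<in>hom_low K G p. pairing K \<rho> \<omega> \<noteq> 1"
proof -
  obtain n x where x: "x \<in> K n" "\<omega> n x \<noteq> \<one>\<^bsub>G (n - p)\<^esub>"
    using coch_eqI[OF assms(1) czero_mem] assms(2) czero_val by metis
  obtain \<chi> where \<chi>: "\<chi> \<in> characters (G (n - p))" "\<chi> (\<omega> n x) \<noteq> 1"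
    using comm_group.char_sep[OF G_grp G_fin coch_val[OF assms(1) x(1)] x(2)] by blast
  define \<rho> where "\<rho> = (\<lambda>m. \<lambda>y\<in>K m. if m = n \<and> y = x then \<chi> else (\<lambda>g\<in>carrier (G (m - p)). 1))"
  have \<rho>: "\<rho> \<in> hom_low K G p" by (rule hl_memI) (auto simp: \<rho>_def \<chi> triv_char[OF grp])
  have "pairing K \<rho> \<omega> = \<rho> n x (\<omega> n x)"
  proof (rule pairing_single[OF x(1)])
    fix m y assume y: "y \<in> K m" "(m, y) \<noteq> (n, x)"
    then show "\<rho> m y (\<omega> m y) = 1" unfolding \<rho>_def using coch_val[OF assms(1) y(1)] by auto
  qed
  moreover have "\<rho> n x = \<chi>" unfolding \<rho>_def using x(1) by simp
  ultimately show ?thesis using \<chi>(2) by (intro bexI[OF _ \<rho>]) simp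
qed

lemma sumX:
  assumes "\<rho> \<in> hom_low K G p"
  shows "(\<Sum>\<alpha>\<in>cochains K G p. pairing K \<rho> \<alpha>) = (if \<rho> = rone K G p then of_nat (card (cochains K G p)) else 0)"
proof (cases "\<rho> = rone K G p")
  case True
  then show ?thesis using pairing_rone by simp
next
  case False
  obtain \<omega> where \<omega>: "\<omega> \<in> cochains K G p" "pairing K \<rho> \<omega> \<noteq> pairing K (rone K G p) \<omega>"
    using nondeg_hl[OF assms rone_mem False] by blast
  have "(\<Sum>\<alpha>\<in>carrier (CG K G p). pairing K \<rho> \<alpha>) = 0"
    by (rule char_sum_zero[OF CG_group, where f="pairing K \<rho>" and a=\<omega>]) (use ischar_CG[OF assms] \<omega> pairing_rone[OF \<omega>(1)] in \<open>auto simp: CG_simps\<close>)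
  then show ?thesis using False by (simp add: CG_simps)
qed

lemma sumR:
  assumes "\<omega> \<in> cochains K G p"
  shows "(\<Sum>\<rho>\<in>hom_low K G p. pairing K \<rho> \<omega>) = (if \<omega> = czero K G p then of_nat (card (hom_low K G p)) else 0)"
proof (cases "\<omega> = czero K G p")
  case True
  then show ?thesis using pairing_czero by simp
next
  case False
  obtain \<rho> where \<rho>: "\<rho> \<in> hom_low K G p" "pairing K \<rho> \<omega> \<noteq> 1"
    using sep_coch[OF assms False] by blast
  have "(\<Sum>r\<in>carrier (DG K G p). pairing K r \<omega>) = 0"
    by (rule char_sum_zero[OF DG_group, where f="\<lambda>r. pairing K r \<omega>" and a=\<rho>]) (use ischar_DG[OF assms] \<rho> in \<open>auto simp: DG_simps\<close>)
  then show ?thesis using False by (simp add: DG_simps)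
qed

lemma card_eq: "card (hom_low K G p) = card (cochains K G p)"
proof -
  have "(\<Sum>\<alpha>\<in>cochains K G p. \<Sum>\<rho>\<in>hom_low K G p. pairing K \<rho> \<alpha>) =
        (\<Sum>\<rho>\<in>hom_low K G p. \<Sum>\<alpha>\<in>cochains K G p. pairing K \<rho> \<alpha>)" by (rule sum.swap)
  moreover have "(\<Sum>\<alpha>\<in>cochains K G p. \<Sum>\<rho>\<in>hom_low K G p. pairing K \<rho> \<alpha>) = of_nat (card (hom_low K G p))"
    using sumR czero_mem coch_finite by (simp add: sum.delta)
  moreover have "(\<Sum>\<rho>\<in>hom_low K G p. \<Sum>\<alpha>\<in>cochains K G p. pairing K \<rho> \<alpha>) = of_nat (card (cochains K G p))"
    using sumX rone_mem hl_finite by (simp add: sum.delta)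
  ultimately show ?thesis by simp
qed

lemma orthX:
  assumes "\<rho> \<in> hom_low K G p" "\<rho>' \<in> hom_low K G p"
  shows "(\<Sum>\<alpha>\<in>cochains K G p. cnj (pairing K \<rho> \<alpha>) * pairing K \<rho>' \<alpha>) =
     (if \<rho> = \<rho>' then of_nat (card (cochains K G p)) else 0)"
proof -
  interpret D: comm_group "DG K G p" by (rule DG_group)
  define ri where "ri = inv\<^bsub>DG K G p\<^esub> \<rho>"
  have ri: "ri \<in> hom_low K G p" unfolding ri_def using assms(1) D.inv_closed by (simp add: DG_simps)
  have "cnj (pairing K \<rho> \<alpha>) * pairing K \<rho>' \<alpha> = pairing K (rmul K G p ri \<rho>') \<alpha>" if a: "\<alpha> \<in> cochains K G p" for \<alpha>
  proof -
    have "pairing K ri \<alpha> = cnj (pairing K \<rho> \<alpha>)"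
      unfolding ri_def using D.ischar_inv[OF D.subgroup_self, of "\<lambda>r. pairing K r \<alpha>"] ischar_DG[OF a] assms(1)
      by (simp add: DG_simps)
    then show ?thesis using pairing_rmul[OF ri assms(2) a] by simp
  qed
  then have "(\<Sum>\<alpha>\<in>cochains K G p. cnj (pairing K \<rho> \<alpha>) * pairing K \<rho>' \<alpha>) =
     (\<Sum>\<alpha>\<in>cochains K G p. pairing K (rmul K G p ri \<rho>') \<alpha>)" by simp
  also have "\<dots> = (if rmul K G p ri \<rho>' = rone K G p then of_nat (card (cochains K G p)) else 0)"
    by (rule sumX[OF rmul_mem[OF ri assms(2)]])
  also have "(rmul K G p ri \<rho>' = rone K G p) \<longleftrightarrow> \<rho> = \<rho>'"
    using grp_inv_eq[OF D.is_group, of \<rho> \<rho>'] assms unfolding ri_def by (simp add: DG_simps)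
  finally show ?thesis by simp
qed

lemma orthR:
  assumes "\<omega> \<in> cochains K G p" "\<gamma> \<in> cochains K G p"
  shows "(\<Sum>\<rho>\<in>hom_low K G p. cnj (pairing K \<rho> \<omega>) * pairing K \<rho> \<gamma>) =
     (if \<omega> = \<gamma> then of_nat (card (hom_low K G p)) else 0)"
proof -
  interpret C: comm_group "CG K G p" by (rule CG_group)
  define wi where "wi = inv\<^bsub>CG K G p\<^esub> \<omega>"
  have wi: "wi \<in> cochains K G p" unfolding wi_def using assms(1) C.inv_closed by (simp add: CG_simps)
  have "cnj (pairing K \<rho> \<omega>) * pairing K \<rho> \<gamma> = pairing K \<rho> (cochain_add K G p wi \<gamma>)" if r: "\<rho> \<in> hom_low K G p" for \<rho>
  proof -
    have "pairing K \<rho> wi = cnj (pairing K \<rho> \<omega>)"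
      unfolding wi_def using C.ischar_inv[OF C.subgroup_self, of "pairing K \<rho>"] ischar_CG[OF r] assms(1)
      by (simp add: CG_simps)
    then show ?thesis using pairing_add[OF r wi assms(2)] by simp
  qed
  then have "(\<Sum>\<rho>\<in>hom_low K G p. cnj (pairing K \<rho> \<omega>) * pairing K \<rho> \<gamma>) =
     (\<Sum>\<rho>\<in>hom_low K G p. pairing K \<rho> (cochain_add K G p wi \<gamma>))" by simp
  also have "\<dots> = (if cochain_add K G p wi \<gamma> = czero K G p then of_nat (card (hom_low K G p)) else 0)"
    by (rule sumR[OF add_mem[OF wi assms(2)]])
  also have "(cochain_add K G p wi \<gamma> = czero K G p) \<longleftrightarrow> \<omega> = \<gamma>"
    using grp_inv_eq[OF C.is_group, of \<omega> \<gamma>] assms unfolding wi_def by (simp add: CG_simps)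
  finally show ?thesis by simp
qed

end

context comm_group begin

lemma finprod_pow:
  assumes "finite A" "f \<in> A \<rightarrow> carrier G"
  shows "(finprod G f A) [^] (k::int) = finprod G (\<lambda>a. f a [^] k) A"
  using assms
proof (induction A rule: finite_induct)
  case empty then show ?case by simp
next
  case (insert x F)
  then have fx: "f x \<in> carrier G" and fF: "f \<in> F \<rightarrow> carrier G" by auto
  have "finprod G f (insert x F) [^] k = (f x \<otimes> finprod G f F) [^] k"
    using insert fx fF by (simp add: finprod_insert)
  also have "\<dots> = f x [^] k \<otimes> finprod G f F [^] k" using fx fF by (simp add: int_pow_distrib)
  also have "\<dots> = finprod G (\<lambda>a. f a [^] k) (insert x F)"
    using insert fx fF by (simp add: finprod_insert Pi_iff)
  finally show ?case .
qed

lemma pow_sum: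
  assumes "finite A" "a \<in> carrier G"
  shows "a [^] (\<Sum>y\<in>A. c y :: int) = finprod G (\<lambda>y. a [^] c y) A"
  using assms(1)
proof (induction A rule: finite_induct)
  case empty then show ?case by simp
next
  case (insert x F)
  then show ?case using assms(2) by (simp add: int_pow_mult finprod_insert Pi_iff)
qed

lemma finprod_swap:
  assumes "finite A" "finite B" "\<And>a b. a \<in> A \<Longrightarrow> b \<in> B \<Longrightarrow> f a b \<in> carrier G"
  shows "finprod G (\<lambda>a. finprod G (\<lambda>b. f a b) B) A = finprod G (\<lambda>b. finprod G (\<lambda>a. f a b) A) B"
  using assms(1,3)
proof (induction A rule: finite_induct)
  case empty then show ?case by simp
next
  case (insert x F)
  have c1: "(\<lambda>b. f x b) \<in> B \<rightarrow> carrier G" using insert by auto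
  have c2: "(\<lambda>b. finprod G (\<lambda>a. f a b) F) \<in> B \<rightarrow> carrier G" using insert by (auto intro!: finprod_closed)
  have "finprod G (\<lambda>a. finprod G (\<lambda>b. f a b) B) (insert x F) =
        finprod G (\<lambda>b. f x b) B \<otimes> finprod G (\<lambda>a. finprod G (\<lambda>b. f a b) B) F"
    using insert by (simp add: finprod_insert Pi_iff finprod_closed)
  also have "\<dots> = finprod G (\<lambda>b. f x b) B \<otimes> finprod G (\<lambda>b. finprod G (\<lambda>a. f a b) F) B"
    using insert by simp
  also have "\<dots> = finprod G (\<lambda>b. f x b \<otimes> finprod G (\<lambda>a. f a b) F) B"
    using finprod_multf[OF c1 c2] by simp
  also have "\<dots> = finprod G (\<lambda>b. finprod G (\<lambda>a. f a b) (insert x F)) B"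
    using insert by (intro finprod_cong') (auto simp: finprod_insert Pi_iff)
  finally show ?case .
qed

end

lemma hom_finprod:
  assumes "comm_group H" "comm_group H'" "h \<in> hom H H'" "finite A" "f \<in> A \<rightarrow> carrier H"
  shows "h (finprod H f A) = finprod H' (\<lambda>a. h (f a)) A"
  using assms(4,5)
proof (induction A rule: finite_induct)
  case empty
  then show ?case using assms(1-3)
    by (simp add: comm_group.axioms(2) comm_monoid.finprod_empty comm_group.axioms(1) group_hom.hom_one group_hom_axioms.intro group_hom_def)
next
  case (insert x F)
  interpret A: comm_group H by fact
  interpret B: comm_group H' by fact
  have hc: "h \<in> carrier H \<rightarrow> carrier H'" using assms(3) unfolding hom_def by auto
  have "h (finprod H f (insert x F)) = h (f x \<otimes>\<^bsub>H\<^esub> finprod H f F)" using insert by simp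
  also have "\<dots> = h (f x) \<otimes>\<^bsub>H'\<^esub> h (finprod H f F)" using assms(3) insert unfolding hom_def by auto
  also have "\<dots> = finprod H' (\<lambda>a. h (f a)) (insert x F)" using insert hc by (auto simp: Pi_iff)
  finally show ?case .
qed

locale cx2 = cx K G for K :: "int \<Rightarrow> 'k set" and G :: "int \<Rightarrow> ('g, 'm) monoid_scheme" +
  fixes bC :: "int \<Rightarrow> 'k \<Rightarrow> 'k \<Rightarrow> int" and bG :: "int \<Rightarrow> 'g \<Rightarrow> 'g"
  assumes C_chain: "\<And>n x z. x \<in> K n \<Longrightarrow> z \<in> K (n - 2) \<Longrightarrow> (\<Sum>y\<in>K (n - 1). bC n x y * bC (n - 1) y z) = 0"
    and bG_hom: "\<And>n. bG n \<in> hom (G n) (G (n - 1))"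
    and G_chain: "\<And>n g. g \<in> carrier (G n) \<Longrightarrow> bG (n - 1) (bG n g) = \<one>\<^bsub>G (n - 2)\<^esub>"
begin

lemma bG_mem: "g \<in> carrier (G n) \<Longrightarrow> bG n g \<in> carrier (G (n - 1))"
  using bG_hom[of n] unfolding hom_def by auto

lemma bG_mult: "a \<in> carrier (G n) \<Longrightarrow> b \<in> carrier (G n) \<Longrightarrow> bG n (a \<otimes>\<^bsub>G n\<^esub> b) = bG n a \<otimes>\<^bsub>G (n - 1)\<^esub> bG n b"
  using bG_hom[of n] unfolding hom_def by auto

lemma bG_pow: "a \<in> carrier (G n) \<Longrightarrow> bG n (a [^]\<^bsub>G n\<^esub> (k::int)) = bG n a [^]\<^bsub>G (n - 1)\<^esub> k"
  using hom_int_pow[OF bG_hom _ grp grp] by blast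

lemma cobdry_val: "x \<in> K n \<Longrightarrow> cobdry K bC G bG p \<omega> n x =
   finprod (G (n - (p + 1))) (\<lambda>y. \<omega> (n - 1) y [^]\<^bsub>G (n - (p + 1))\<^esub> bC n x y) (K (n - 1))
   \<otimes>\<^bsub>G (n - (p + 1))\<^esub> (bG (n - p) (\<omega> n x)) [^]\<^bsub>G (n - (p + 1))\<^esub> (if even p then (-1::int) else 1)"
  unfolding cobdry_def by simp

lemma cobdry_out: "x \<notin> K n \<Longrightarrow> cobdry K bC G bG p \<omega> n x = undefined"
  unfolding cobdry_def by simp

lemma idx1: "G (n - 1 - p) = G (n - (p + 1))" by (simp add: algebra_simps)
lemma idx2: "G (n - p - 1) = G (n - (p + 1))" by (simp add: algebra_simps)

lemma cobdry_mem:
  assumes w: "\<omega> \<in> cochains K G p"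
  shows "cobdry K bC G bG p \<omega> \<in> cochains K G (p + 1)"
proof (rule coch_memI)
  fix n x assume x: "x \<in> K n"
  define H where "H = G (n - (p + 1))"
  interpret H: comm_group H unfolding H_def by (rule G_grp)
  have wy: "\<omega> (n - 1) y \<in> carrier H" if "y \<in> K (n - 1)" for y
    using coch_val[OF w that] idx1 unfolding H_def by simp
  have bx: "bG (n - p) (\<omega> n x) \<in> carrier H"
    using bG_mem[OF coch_val[OF w x]] idx2 unfolding H_def by simp
  show "cobdry K bC G bG p \<omega> n x \<in> carrier (G (n - (p + 1)))"
    unfolding cobdry_val[OF x] H_def[symmetric] using wy bx by (auto intro!: H.finprod_closed)
next
  fix n x assume "x \<notin> K n" then show "cobdry K bC G bG p \<omega> n x = undefined" by (rule cobdry_out)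
qed

lemma cobdry_add:
  assumes w: "\<omega> \<in> cochains K G p" and a: "\<alpha> \<in> cochains K G p"
  shows "cobdry K bC G bG p (cochain_add K G p \<omega> \<alpha>) = cochain_add K G (p + 1) (cobdry K bC G bG p \<omega>) (cobdry K bC G bG p \<alpha>)"
proof (rule coch_eqI[OF cobdry_mem[OF add_mem[OF w a]] add_mem[OF cobdry_mem[OF w] cobdry_mem[OF a]]])
  fix n x assume x: "x \<in> K n"
  define H where "H = G (n - (p + 1))"
  interpret H: comm_group H unfolding H_def by (rule G_grp)
  define e where "e = (if even p then (-1::int) else 1)"
  have wy: "\<omega> (n - 1) y \<in> carrier H" "\<alpha> (n - 1) y \<in> carrier H" if "y \<in> K (n - 1)" for y
    using coch_val[OF w that] coch_val[OF a that] idx1 unfolding H_def by simp_all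
  have wx: "\<omega> n x \<in> carrier (G (n - p))" "\<alpha> n x \<in> carrier (G (n - p))"
    using coch_val[OF w x] coch_val[OF a x] by simp_all
  have bx: "bG (n - p) (\<omega> n x) \<in> carrier H" "bG (n - p) (\<alpha> n x) \<in> carrier H"
    using bG_mem[OF wx(1)] bG_mem[OF wx(2)] idx2 unfolding H_def by simp_all
  have bm: "bG (n - p) (\<omega> n x \<otimes>\<^bsub>G (n - p)\<^esub> \<alpha> n x) = bG (n - p) (\<omega> n x) \<otimes>\<^bsub>H\<^esub> bG (n - p) (\<alpha> n x)"
    using bG_mult[OF wx] idx2 unfolding H_def by simp
  have s: "finprod H (\<lambda>y. cochain_add K G p \<omega> \<alpha> (n - 1) y [^]\<^bsub>H\<^esub> bC n x y) (K (n - 1)) =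
      finprod H (\<lambda>y. \<omega> (n - 1) y [^]\<^bsub>H\<^esub> bC n x y) (K (n - 1)) \<otimes>\<^bsub>H\<^esub>
      finprod H (\<lambda>y. \<alpha> (n - 1) y [^]\<^bsub>H\<^esub> bC n x y) (K (n - 1))"
  proof -
    have "finprod H (\<lambda>y. cochain_add K G p \<omega> \<alpha> (n - 1) y [^]\<^bsub>H\<^esub> bC n x y) (K (n - 1)) =
      finprod H (\<lambda>y. \<omega> (n - 1) y [^]\<^bsub>H\<^esub> bC n x y \<otimes>\<^bsub>H\<^esub> \<alpha> (n - 1) y [^]\<^bsub>H\<^esub> bC n x y) (K (n - 1))"
    proof (rule H.finprod_cong')
      fix y assume y: "y \<in> K (n - 1)"
      have "cochain_add K G p \<omega> \<alpha> (n - 1) y = \<omega> (n - 1) y \<otimes>\<^bsub>H\<^esub> \<alpha> (n - 1) y"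
        using add_val[OF y] idx1 unfolding H_def by simp
      then show "cochain_add K G p \<omega> \<alpha> (n - 1) y [^]\<^bsub>H\<^esub> bC n x y =
          \<omega> (n - 1) y [^]\<^bsub>H\<^esub> bC n x y \<otimes>\<^bsub>H\<^esub> \<alpha> (n - 1) y [^]\<^bsub>H\<^esub> bC n x y"
        using wy[OF y] by (simp add: H.int_pow_distrib)
    qed (use wy in auto)
    also have "\<dots> = finprod H (\<lambda>y. \<omega> (n - 1) y [^]\<^bsub>H\<^esub> bC n x y) (K (n - 1)) \<otimes>\<^bsub>H\<^esub>
      finprod H (\<lambda>y. \<alpha> (n - 1) y [^]\<^bsub>H\<^esub> bC n x y) (K (n - 1))"
      by (rule H.finprod_multf) (use wy in auto)
    finally show ?thesis .
  qed
  have "cobdry K bC G bG p (cochain_add K G p \<omega> \<alpha>) n x =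
     (finprod H (\<lambda>y. \<omega> (n - 1) y [^]\<^bsub>H\<^esub> bC n x y) (K (n - 1)) \<otimes>\<^bsub>H\<^esub>
      finprod H (\<lambda>y. \<alpha> (n - 1) y [^]\<^bsub>H\<^esub> bC n x y) (K (n - 1))) \<otimes>\<^bsub>H\<^esub>
     (bG (n - p) (\<omega> n x) [^]\<^bsub>H\<^esub> e \<otimes>\<^bsub>H\<^esub> bG (n - p) (\<alpha> n x) [^]\<^bsub>H\<^esub> e)"
    unfolding cobdry_val[OF x] H_def[symmetric] e_def[symmetric] add_val[OF x] s bm
    using bx by (simp add: H.int_pow_distrib)
  also have "\<dots> = (finprod H (\<lambda>y. \<omega> (n - 1) y [^]\<^bsub>H\<^esub> bC n x y) (K (n - 1)) \<otimes>\<^bsub>H\<^esub> bG (n - p) (\<omega> n x) [^]\<^bsub>H\<^esub> e)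
      \<otimes>\<^bsub>H\<^esub> (finprod H (\<lambda>y. \<alpha> (n - 1) y [^]\<^bsub>H\<^esub> bC n x y) (K (n - 1)) \<otimes>\<^bsub>H\<^esub> bG (n - p) (\<alpha> n x) [^]\<^bsub>H\<^esub> e)"
    using bx wy by (simp add: H.m_ac Pi_iff H.finprod_closed)
  also have "\<dots> = cochain_add K G (p + 1) (cobdry K bC G bG p \<omega>) (cobdry K bC G bG p \<alpha>) n x"
    unfolding add_val[OF x] cobdry_val[OF x] H_def[symmetric] e_def[symmetric] ..
  finally show "cobdry K bC G bG p (cochain_add K G p \<omega> \<alpha>) n x =
      cochain_add K G (p + 1) (cobdry K bC G bG p \<omega>) (cobdry K bC G bG p \<alpha>) n x" .
qed

end

context cx2 begin

lemma dm1_val: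
  assumes a: "\<alpha> \<in> cochains K G (-1)" and x: "x \<in> K m"
  shows "cobdry K bC G bG (-1) \<alpha> m x =
    finprod (G m) (\<lambda>z. \<alpha> (m - 1) z [^]\<^bsub>G m\<^esub> bC m x z) (K (m - 1)) \<otimes>\<^bsub>G m\<^esub> bG (m + 1) (\<alpha> m x)"
proof -
  have c: "bG (m + 1) (\<alpha> m x) \<in> carrier (G m)" using bG_mem[OF coch_val[OF a x]] by simp
  show ?thesis using c unfolding cobdry_val[OF x] by (simp add: group.int_pow_1[OF grp])
qed

lemma d0_val:
  assumes x: "x \<in> K n" and w: "\<omega> \<in> cochains K G 0"
  shows "cobdry K bC G bG 0 \<omega> n x =
    finprod (G (n - 1)) (\<lambda>y. \<omega> (n - 1) y [^]\<^bsub>G (n - 1)\<^esub> bC n x y) (K (n - 1)) \<otimes>\<^bsub>G (n - 1)\<^esub> inv\<^bsub>G (n - 1)\<^esub> (bG n (\<omega> n x))"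
proof -
  have c: "bG n (\<omega> n x) \<in> carrier (G (n - 1))" using bG_mem[OF coch_val[OF w x]] by simp
  have "bG n (\<omega> n x) [^]\<^bsub>G (n - 1)\<^esub> (-1::int) = inv\<^bsub>G (n - 1)\<^esub> (bG n (\<omega> n x))"
    using group.int_pow_neg[OF grp c, of 1] group.int_pow_1[OF grp c] by simp
  then show ?thesis unfolding cobdry_val[OF x] by simp
qed

lemma dd0:
  assumes a: "\<alpha> \<in> cochains K G (-1)"
  shows "cobdry K bC G bG 0 (cobdry K bC G bG (-1) \<alpha>) = czero K G 1"
proof -
  define w where "w = cobdry K bC G bG (-1) \<alpha>"
  have w: "w \<in> cochains K G 0" using cobdry_mem[OF a] unfolding w_def by simp
  have dw: "cobdry K bC G bG 0 w \<in> cochains K G 1" using cobdry_mem[OF w] by simp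
  show ?thesis unfolding w_def[symmetric]
  proof (rule coch_eqI[OF dw czero_mem])
    fix n x assume x: "x \<in> K n"
    define H where "H = G (n - 1)"
    interpret H: comm_group H unfolding H_def by (rule G_grp)
    define c0 where "c0 y = bC n x y" for y
    define c1 where "c1 y z = bC (n - 1) y z" for y z
    have e1: "G (n - 2 - - 1) = H" unfolding H_def by (rule arg_cong[where f=G]) simp
    have Ac: "\<alpha> (n - 2) z \<in> carrier H" if "z \<in> K (n - 2)" for z
      using coch_val[OF a that] e1 by simp
    have an1: "\<alpha> (n - 1) y \<in> carrier (G n)" if "y \<in> K (n - 1)" for y
      using coch_val[OF a that] by simp
    define B where "B y = bG n (\<alpha> (n - 1) y)" for y
    have Bc: "B y \<in> carrier H" if "y \<in> K (n - 1)" for y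
      using bG_mem[OF an1[OF that]] unfolding B_def H_def .
    have wy: "w (n - 1) y = finprod H (\<lambda>z. \<alpha> (n - 2) z [^]\<^bsub>H\<^esub> c1 y z) (K (n - 2)) \<otimes>\<^bsub>H\<^esub> B y"
      if y: "y \<in> K (n - 1)" for y
      using dm1_val[OF a y] unfolding H_def B_def c1_def w_def by simp
    have wx: "w n x = finprod (G n) (\<lambda>y. \<alpha> (n - 1) y [^]\<^bsub>G n\<^esub> c0 y) (K (n - 1)) \<otimes>\<^bsub>G n\<^esub> bG (n + 1) (\<alpha> n x)"
      using dm1_val[OF a x] unfolding c0_def w_def by simp
    define P where "P = finprod H (\<lambda>y. B y [^]\<^bsub>H\<^esub> c0 y) (K (n - 1))"
    have Pc: "P \<in> carrier H" unfolding P_def using Bc by (auto intro!: H.finprod_closed)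
    have bw: "bG n (w n x) = P"
    proof -
      interpret Gn: comm_group "G n" by (rule G_grp)
      have f1: "finprod (G n) (\<lambda>y. \<alpha> (n - 1) y [^]\<^bsub>G n\<^esub> c0 y) (K (n - 1)) \<in> carrier (G n)"
        using an1 by (auto intro!: Gn.finprod_closed)
      have g0: "\<alpha> n x \<in> carrier (G (n + 1))" using coch_val[OF a x] by simp
      have g1: "bG (n + 1) (\<alpha> n x) \<in> carrier (G n)" using bG_mem[OF g0] by simp
      have "bG n (w n x) = bG n (finprod (G n) (\<lambda>y. \<alpha> (n - 1) y [^]\<^bsub>G n\<^esub> c0 y) (K (n - 1)))
          \<otimes>\<^bsub>H\<^esub> bG n (bG (n + 1) (\<alpha> n x))"
        using bG_mult[OF f1 g1] wx unfolding H_def by simp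
      also have "bG n (bG (n + 1) (\<alpha> n x)) = \<one>\<^bsub>H\<^esub>"
        using G_chain[OF g0] unfolding H_def by simp
      also have "bG n (finprod (G n) (\<lambda>y. \<alpha> (n - 1) y [^]\<^bsub>G n\<^esub> c0 y) (K (n - 1))) =
          finprod H (\<lambda>y. bG n (\<alpha> (n - 1) y [^]\<^bsub>G n\<^esub> c0 y)) (K (n - 1))"
        unfolding H_def by (rule hom_finprod[OF G_grp G_grp bG_hom K_fin]) (use an1 in auto)
      also have "\<dots> = P" unfolding P_def
        by (rule H.finprod_cong') (use an1 Bc in \<open>auto simp: B_def H_def bG_pow group.int_pow_closed[OF grp]\<close>)
      finally show ?thesis using Pc by simp
    qed
    have Q: "finprod H (\<lambda>y. finprod H (\<lambda>z. \<alpha> (n - 2) z [^]\<^bsub>H\<^esub> (c1 y z * c0 y)) (K (n - 2))) (K (n - 1)) = \<one>\<^bsub>H\<^esub>"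
    proof -
      have "finprod H (\<lambda>y. finprod H (\<lambda>z. \<alpha> (n - 2) z [^]\<^bsub>H\<^esub> (c1 y z * c0 y)) (K (n - 2))) (K (n - 1)) =
          finprod H (\<lambda>z. finprod H (\<lambda>y. \<alpha> (n - 2) z [^]\<^bsub>H\<^esub> (c1 y z * c0 y)) (K (n - 1))) (K (n - 2))"
        by (rule H.finprod_swap[OF K_fin K_fin]) (use Ac in auto)
      also have "\<dots> = finprod H (\<lambda>z. \<alpha> (n - 2) z [^]\<^bsub>H\<^esub> (\<Sum>y\<in>K (n - 1). c1 y z * c0 y)) (K (n - 2))"
        by (rule H.finprod_cong') (use Ac in \<open>auto simp: H.pow_sum[OF K_fin]\<close>)
      also have "\<dots> = finprod H (\<lambda>z. \<one>\<^bsub>H\<^esub>) (K (n - 2))"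
      proof (rule H.finprod_cong')
        fix z assume z: "z \<in> K (n - 2)"
        have "(\<Sum>y\<in>K (n - 1). c1 y z * c0 y) = 0"
          using C_chain[OF x z] unfolding c0_def c1_def by (simp add: mult.commute)
        then show "\<alpha> (n - 2) z [^]\<^bsub>H\<^esub> (\<Sum>y\<in>K (n - 1). c1 y z * c0 y) = \<one>\<^bsub>H\<^esub>" by simp
      qed auto
      also have "\<dots> = \<one>\<^bsub>H\<^esub>" by simp
      finally show ?thesis .
    qed
    have first: "finprod H (\<lambda>y. w (n - 1) y [^]\<^bsub>H\<^esub> c0 y) (K (n - 1)) = P"
    proof -
      have "finprod H (\<lambda>y. w (n - 1) y [^]\<^bsub>H\<^esub> c0 y) (K (n - 1)) =
        finprod H (\<lambda>y. finprod H (\<lambda>z. \<alpha> (n - 2) z [^]\<^bsub>H\<^esub> (c1 y z * c0 y)) (K (n - 2)) \<otimes>\<^bsub>H\<^esub> B y [^]\<^bsub>H\<^esub> c0 y) (K (n - 1))"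
      proof (rule H.finprod_cong')
        fix y assume y: "y \<in> K (n - 1)"
        have Fc: "finprod H (\<lambda>z. \<alpha> (n - 2) z [^]\<^bsub>H\<^esub> c1 y z) (K (n - 2)) \<in> carrier H"
          using Ac by (auto intro!: H.finprod_closed)
        have "w (n - 1) y [^]\<^bsub>H\<^esub> c0 y = finprod H (\<lambda>z. \<alpha> (n - 2) z [^]\<^bsub>H\<^esub> c1 y z) (K (n - 2)) [^]\<^bsub>H\<^esub> c0 y \<otimes>\<^bsub>H\<^esub> B y [^]\<^bsub>H\<^esub> c0 y"
          using wy[OF y] Fc Bc[OF y] by (simp add: H.int_pow_distrib)
        also have "finprod H (\<lambda>z. \<alpha> (n - 2) z [^]\<^bsub>H\<^esub> c1 y z) (K (n - 2)) [^]\<^bsub>H\<^esub> c0 y =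
            finprod H (\<lambda>z. (\<alpha> (n - 2) z [^]\<^bsub>H\<^esub> c1 y z) [^]\<^bsub>H\<^esub> c0 y) (K (n - 2))"
          by (rule H.finprod_pow[OF K_fin]) (use Ac in auto)
        also have "\<dots> = finprod H (\<lambda>z. \<alpha> (n - 2) z [^]\<^bsub>H\<^esub> (c1 y z * c0 y)) (K (n - 2))"
          by (rule H.finprod_cong') (use Ac in \<open>auto simp: H.int_pow_pow\<close>)
        finally show "w (n - 1) y [^]\<^bsub>H\<^esub> c0 y =
            finprod H (\<lambda>z. \<alpha> (n - 2) z [^]\<^bsub>H\<^esub> (c1 y z * c0 y)) (K (n - 2)) \<otimes>\<^bsub>H\<^esub> B y [^]\<^bsub>H\<^esub> c0 y" .
      qed (use Ac Bc in \<open>auto intro!: H.finprod_closed\<close>)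
      also have "\<dots> = finprod H (\<lambda>y. finprod H (\<lambda>z. \<alpha> (n - 2) z [^]\<^bsub>H\<^esub> (c1 y z * c0 y)) (K (n - 2))) (K (n - 1))
          \<otimes>\<^bsub>H\<^esub> P"
        unfolding P_def by (rule H.finprod_multf) (use Ac Bc in \<open>auto intro!: H.finprod_closed\<close>)
      also have "\<dots> = P" unfolding Q using Pc by simp
      finally show ?thesis .
    qed
    have "cobdry K bC G bG 0 w n x = P \<otimes>\<^bsub>H\<^esub> inv\<^bsub>H\<^esub> P"
      using d0_val[OF x w] first bw unfolding H_def c0_def by simp
    also have "\<dots> = \<one>\<^bsub>H\<^esub>" using Pc by simp
    finally show "cobdry K bC G bG 0 w n x = czero K G 1 n x" using czero_val[OF x] unfolding H_def by simp
  qed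
qed

end

definition trn :: "(int \<Rightarrow> 'k set) \<Rightarrow> (int \<Rightarrow> 'k \<Rightarrow> 'k \<Rightarrow> int)
    \<Rightarrow> (int \<Rightarrow> ('g, 'm) monoid_scheme) \<Rightarrow> (int \<Rightarrow> 'g \<Rightarrow> 'g)
    \<Rightarrow> (int \<Rightarrow> 'k \<Rightarrow> 'g \<Rightarrow> complex) \<Rightarrow> (int \<Rightarrow> 'k \<Rightarrow> 'g \<Rightarrow> complex)" where
  "trn K bC G bG \<nu> = (\<lambda>m. \<lambda>y\<in>K m. \<lambda>g\<in>carrier (G m).
     (\<Prod>x\<in>K (m + 1). \<nu> (m + 1) x g powi bC (m + 1) x y) * cnj (\<nu> m y (bG m g)))"

context cx2 begin

lemma nu_up: "\<nu> \<in> hom_low K G 1 \<Longrightarrow> x \<in> K (m + 1) \<Longrightarrow> \<nu> (m + 1) x \<in> characters (G m)"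
  using hl_val[of \<nu> 1 x "m + 1"] by simp

lemma nu_same: "\<nu> \<in> hom_low K G 1 \<Longrightarrow> y \<in> K m \<Longrightarrow> \<nu> m y \<in> characters (G (m - 1))"
  using hl_val[of \<nu> 1 y m] by simp

lemma trn_mem:
  assumes nu: "\<nu> \<in> hom_low K G 1"
  shows "trn K bC G bG \<nu> \<in> hom_low K G 0"
proof (rule hl_memI)
  fix m y assume y: "y \<in> K m"
  interpret Gm: comm_group "G m" by (rule G_grp)
  have val: "trn K bC G bG \<nu> m y = (\<lambda>g\<in>carrier (G m).
     (\<Prod>x\<in>K (m + 1). \<nu> (m + 1) x g powi bC (m + 1) x y) * cnj (\<nu> m y (bG m g)))"
    unfolding trn_def using y by simp
  have nrm: "cmod ((\<Prod>x\<in>K (m + 1). \<nu> (m + 1) x g powi bC (m + 1) x y) * cnj (\<nu> m y (bG m g))) = 1"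
    if g: "g \<in> carrier (G m)" for g
  proof -
    have "cmod (\<nu> (m + 1) x g) = 1" if "x \<in> K (m + 1)" for x using char_norm[OF nu_up[OF nu that] g] .
    then have "cmod (\<Prod>x\<in>K (m + 1). \<nu> (m + 1) x g powi bC (m + 1) x y) = 1"
      unfolding prod_norm[symmetric] by (intro prod.neutral ballI) (simp add: norm_power_int)
    moreover have "cmod (\<nu> m y (bG m g)) = 1" using char_norm[OF nu_same[OF nu y] bG_mem[OF g]] .
    ultimately show ?thesis by (simp add: norm_mult)
  qed
  have mul: "(\<Prod>x\<in>K (m + 1). \<nu> (m + 1) x (a \<otimes>\<^bsub>G m\<^esub> b) powi bC (m + 1) x y) * cnj (\<nu> m y (bG m (a \<otimes>\<^bsub>G m\<^esub> b))) =
      ((\<Prod>x\<in>K (m + 1). \<nu> (m + 1) x a powi bC (m + 1) x y) * cnj (\<nu> m y (bG m a))) *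
      ((\<Prod>x\<in>K (m + 1). \<nu> (m + 1) x b powi bC (m + 1) x y) * cnj (\<nu> m y (bG m b)))"
    if a: "a \<in> carrier (G m)" and b: "b \<in> carrier (G m)" for a b
  proof -
    have "(\<Prod>x\<in>K (m + 1). \<nu> (m + 1) x (a \<otimes>\<^bsub>G m\<^esub> b) powi bC (m + 1) x y) =
        (\<Prod>x\<in>K (m + 1). \<nu> (m + 1) x a powi bC (m + 1) x y * \<nu> (m + 1) x b powi bC (m + 1) x y)"
      by (intro prod.cong refl) (simp add: char_mult[OF nu_up[OF nu] a b] power_int_mult_distrib)
    moreover have "\<nu> m y (bG m (a \<otimes>\<^bsub>G m\<^esub> b)) = \<nu> m y (bG m a) * \<nu> m y (bG m b)"
      using bG_mult[OF a b] char_mult[OF nu_same[OF nu y] bG_mem[OF a] bG_mem[OF b]] by simp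
    ultimately show ?thesis by (simp add: prod.distrib)
  qed
  show "trn K bC G bG \<nu> m y \<in> characters (G (m - 0))"
    unfolding val characters_def hom_def U1_def using nrm mul by (auto simp: Gm.m_closed)
next
  fix m y assume "y \<notin> K m" then show "trn K bC G bG \<nu> m y = undefined" unfolding trn_def by simp
qed

lemma trn_adj:
  assumes nu: "\<nu> \<in> hom_low K G 1" and w: "\<omega> \<in> cochains K G 0"
  shows "pairing K (trn K bC G bG \<nu>) \<omega> = pairing K \<nu> (cobdry K bC G bG 0 \<omega>)"
proof -
  define F where "F n x y = \<nu> n x (\<omega> (n - 1) y) powi bC n x y" for n x y
  define Bt where "Bt n x = cnj (\<nu> n x (bG n (\<omega> n x)))" for n x
  have wv: "\<omega> m y \<in> carrier (G m)" if "y \<in> K m" for m y using coch_val[OF w that] by simp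
  have L: "trn K bC G bG \<nu> m y (\<omega> m y) = (\<Prod>x\<in>K (m + 1). F (m + 1) x y) * Bt m y" if y: "y \<in> K m" for m y
    unfolding trn_def F_def Bt_def using y wv[OF y] by simp
  have R: "\<nu> n x (cobdry K bC G bG 0 \<omega> n x) = (\<Prod>y\<in>K (n - 1). F n x y) * Bt n x" if x: "x \<in> K n" for n x
  proof -
    interpret H: comm_group "G (n - 1)" by (rule G_grp)
    have chi: "\<nu> n x \<in> characters (G (n - 1))" by (rule nu_same[OF nu x])
    have wy: "\<omega> (n - 1) y \<in> carrier (G (n - 1))" if "y \<in> K (n - 1)" for y using wv[OF that] .
    have bx: "bG n (\<omega> n x) \<in> carrier (G (n - 1))" using bG_mem[OF wv[OF x]] .
    have fc: "finprod (G (n - 1)) (\<lambda>y. \<omega> (n - 1) y [^]\<^bsub>G (n - 1)\<^esub> bC n x y) (K (n - 1)) \<in> carrier (G (n - 1))"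
      using wy by (auto intro!: H.finprod_closed)
    have "\<nu> n x (cobdry K bC G bG 0 \<omega> n x) =
        \<nu> n x (finprod (G (n - 1)) (\<lambda>y. \<omega> (n - 1) y [^]\<^bsub>G (n - 1)\<^esub> bC n x y) (K (n - 1))) *
        \<nu> n x (inv\<^bsub>G (n - 1)\<^esub> (bG n (\<omega> n x)))"
      unfolding d0_val[OF x w] by (rule char_mult[OF chi fc]) (use bx in simp)
    also have "\<nu> n x (finprod (G (n - 1)) (\<lambda>y. \<omega> (n - 1) y [^]\<^bsub>G (n - 1)\<^esub> bC n x y) (K (n - 1))) =
        (\<Prod>y\<in>K (n - 1). \<nu> n x (\<omega> (n - 1) y [^]\<^bsub>G (n - 1)\<^esub> bC n x y))"
      by (rule char_finprod[OF G_grp chi K_fin]) (use wy in auto)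
    also have "\<dots> = (\<Prod>y\<in>K (n - 1). F n x y)"
      unfolding F_def by (intro prod.cong refl) (simp add: char_pow[OF grp chi] wy)
    also have "\<nu> n x (inv\<^bsub>G (n - 1)\<^esub> (bG n (\<omega> n x))) = Bt n x"
      unfolding Bt_def by (rule char_inv[OF grp chi bx])
    finally show ?thesis .
  qed
  define M where "M = NN \<union> (\<lambda>m. m + 1) ` NN"
  have Mf: "finite M" unfolding M_def using NN_fin by simp
  have Kout: "K n = {}" if "n \<notin> NN" for n using that unfolding NN_def by simp
  have "pairing K (trn K bC G bG \<nu>) \<omega> = (\<Prod>m\<in>NN. \<Prod>y\<in>K m. (\<Prod>x\<in>K (m + 1). F (m + 1) x y) * Bt m y)"
    unfolding pairing_NN using L by (intro prod.cong refl) simp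
  also have "\<dots> = (\<Prod>m\<in>NN. \<Prod>y\<in>K m. \<Prod>x\<in>K (m + 1). F (m + 1) x y) * (\<Prod>m\<in>NN. \<Prod>y\<in>K m. Bt m y)"
    by (simp add: prod.distrib)
  also have "(\<Prod>m\<in>NN. \<Prod>y\<in>K m. \<Prod>x\<in>K (m + 1). F (m + 1) x y) =
      (\<Prod>n\<in>(\<lambda>m. m + 1) ` NN. \<Prod>y\<in>K (n - 1). \<Prod>x\<in>K n. F n x y)"
    by (subst prod.reindex) (auto simp: inj_on_def)
  also have "\<dots> = (\<Prod>n\<in>M. \<Prod>y\<in>K (n - 1). \<Prod>x\<in>K n. F n x y)"
  proof (rule prod.mono_neutral_left[OF Mf])
    show "(\<lambda>m. m + 1) ` NN \<subseteq> M" unfolding M_def by auto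
  next
    show "\<forall>i\<in>M - (\<lambda>m. m + 1) ` NN. (\<Prod>y\<in>K (i - 1). \<Prod>x\<in>K i. F i x y) = 1"
    proof
      fix i assume "i \<in> M - (\<lambda>m. m + 1) ` NN"
      then have "i - 1 \<notin> NN" by (metis DiffD2 diff_add_cancel image_eqI)
      then show "(\<Prod>y\<in>K (i - 1). \<Prod>x\<in>K i. F i x y) = 1" using Kout by simp
    qed
  qed
  also have "\<dots> = (\<Prod>n\<in>NN. \<Prod>y\<in>K (n - 1). \<Prod>x\<in>K n. F n x y)"
  proof (rule prod.mono_neutral_right[OF Mf])
    show "NN \<subseteq> M" unfolding M_def by auto
  next
    show "\<forall>i\<in>M - NN. (\<Prod>y\<in>K (i - 1). \<Prod>x\<in>K i. F i x y) = 1" using Kout by simp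
  qed
  also have "\<dots> = (\<Prod>n\<in>NN. \<Prod>x\<in>K n. \<Prod>y\<in>K (n - 1). F n x y)"
    by (rule prod.cong[OF refl], rule prod.swap)
  also have "(\<Prod>n\<in>NN. \<Prod>x\<in>K n. \<Prod>y\<in>K (n - 1). F n x y) * (\<Prod>m\<in>NN. \<Prod>y\<in>K m. Bt m y) =
      (\<Prod>n\<in>NN. \<Prod>x\<in>K n. (\<Prod>y\<in>K (n - 1). F n x y) * Bt n x)"
    by (simp add: prod.distrib)
  also have "\<dots> = pairing K \<nu> (cobdry K bC G bG 0 \<omega>)"
    unfolding pairing_NN using R by (intro prod.cong refl) simp
  finally show ?thesis .
qed

lemma bdry_prop:
  assumes nu: "\<nu> \<in> hom_low K G 1"
  shows "bdry K bC G bG 0 \<nu> \<in> hom_low K G 0 \<and>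
    (\<forall>\<omega>\<in>cochains K G 0. pairing K (bdry K bC G bG 0 \<nu>) \<omega> = pairing K \<nu> (cobdry K bC G bG 0 \<omega>))"
proof -
  let ?P = "\<lambda>\<rho>. \<rho> \<in> hom_low K G 0 \<and>
    (\<forall>\<omega>\<in>cochains K G 0. pairing K \<rho> \<omega> = pairing K \<nu> (cobdry K bC G bG 0 \<omega>))"
  have ex: "?P (trn K bC G bG \<nu>)" using trn_mem[OF nu] trn_adj[OF nu] by blast
  have un: "r = r'" if h: "?P r" "?P r'" for r r'
  proof (rule ccontr)
    assume "r \<noteq> r'"
    then obtain \<omega> where "\<omega> \<in> cochains K G 0" "pairing K r \<omega> \<noteq> pairing K r' \<omega>"
      using nondeg_hl[of r 0 r'] h by blast
    then show False using h by simp
  qed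
  have "?P (THE \<rho>. ?P \<rho>)" by (rule theI[of ?P, OF ex]) (rule un, assumption, rule ex)
  then show ?thesis unfolding bdry_def .
qed

end

context cx2 begin

lemma d0_mem: "a \<in> cochains K G 0 \<Longrightarrow> cobdry K bC G bG 0 a \<in> cochains K G 1"
  using cobdry_mem[of a 0] by simp

lemma d1_mem: "\<alpha> \<in> cochains K G (-1) \<Longrightarrow> cobdry K bC G bG (-1) \<alpha> \<in> cochains K G 0"
  using cobdry_mem[of \<alpha> "-1"] by simp

lemma card_coch_pos: "card (cochains K G p) > 0"
  using coch_finite czero_mem card_gt_0_iff by blast

lemma card_hl_pos: "card (hom_low K G p) > 0"
  using hl_finite rone_mem card_gt_0_iff by blast

lemma flux_val:
  assumes w: "\<omega> \<in> cochains K G 1"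
  shows "flux_op K bC G bG \<omega> a b = (if a \<in> cochains K G 0 \<and> a = b \<and> cobdry K bC G bG 0 a = \<omega> then 1 else 0)"
proof (cases "a \<in> cochains K G 0 \<and> a = b")
  case True
  then have a: "a \<in> cochains K G 0" and ab: "b = a" by auto
  have "(\<Sum>\<beta>\<in>hom_low K G 1. cnj (pairing K \<beta> \<omega>) * clock_op K G (bdry K bC G bG 0 \<beta>) a b) =
        (\<Sum>\<beta>\<in>hom_low K G 1. cnj (pairing K \<beta> \<omega>) * pairing K \<beta> (cobdry K bC G bG 0 a))"
    unfolding clock_op_def using a ab bdry_prop by (intro sum.cong refl) auto
  also have "\<dots> = (if \<omega> = cobdry K bC G bG 0 a then of_nat (card (hom_low K G 1)) else 0)"
    by (rule orthR[OF w d0_mem[OF a]])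
  finally show ?thesis unfolding flux_op_def using True card_hl_pos[of 1] by auto
next
  case False
  then show ?thesis unfolding flux_op_def clock_op_def by auto
qed

lemma flux_adj: "\<omega> \<in> cochains K G 1 \<Longrightarrow> op_adj (flux_op K bC G bG \<omega>) = flux_op K bC G bG \<omega>"
  unfolding op_adj_def by (intro ext) (auto simp: flux_val)

lemma flux_mult:
  assumes w: "\<omega> \<in> cochains K G 1" and w': "\<omega>' \<in> cochains K G 1"
  shows "op_mult (cochains K G 0) (flux_op K bC G bG \<omega>) (flux_op K bC G bG \<omega>') =
    (if \<omega> = \<omega>' then flux_op K bC G bG \<omega>' else op_zero)"
proof (intro ext)
  fix a c
  have "op_mult (cochains K G 0) (flux_op K bC G bG \<omega>) (flux_op K bC G bG \<omega>') a c =
     (\<Sum>b\<in>cochains K G 0. if b = a then (if a \<in> cochains K G 0 \<and> cobdry K bC G bG 0 a = \<omega> then 1 else 0) *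
        (if a \<in> cochains K G 0 \<and> a = c \<and> cobdry K bC G bG 0 a = \<omega>' then 1 else 0) else 0)"
    unfolding op_mult_def flux_val[OF w] flux_val[OF w'] by (intro sum.cong refl) auto
  also have "\<dots> = (if a \<in> cochains K G 0 then (if cobdry K bC G bG 0 a = \<omega> then 1 else 0) *
        (if a = c \<and> cobdry K bC G bG 0 a = \<omega>' then 1 else 0) else 0)"
    using coch_finite by (simp add: sum.delta')
  also have "\<dots> = (if \<omega> = \<omega>' then flux_op K bC G bG \<omega>' else op_zero) a c"
    unfolding op_zero_def flux_val[OF w'] by auto
  finally show "op_mult (cochains K G 0) (flux_op K bC G bG \<omega>) (flux_op K bC G bG \<omega>') a c =
    (if \<omega> = \<omega>' then flux_op K bC G bG \<omega>' else op_zero) a c" .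
qed

lemma flux_sum: "(\<lambda>a b. \<Sum>\<omega>\<in>cochains K G 1. flux_op K bC G bG \<omega> a b) = op_id (cochains K G 0)"
proof (intro ext)
  fix a b
  have "(\<Sum>\<omega>\<in>cochains K G 1. flux_op K bC G bG \<omega> a b) =
     (\<Sum>\<omega>\<in>cochains K G 1. if \<omega> = cobdry K bC G bG 0 a then (if a \<in> cochains K G 0 \<and> a = b then 1 else 0) else 0)"
    by (intro sum.cong refl) (auto simp: flux_val)
  also have "\<dots> = op_id (cochains K G 0) a b"
    using coch_finite d0_mem unfolding op_id_def by (auto simp: sum.delta')
  finally show "(\<Sum>\<omega>\<in>cochains K G 1. flux_op K bC G bG \<omega> a b) = op_id (cochains K G 0) a b" .
qed

end

context cx2 begin

lemma d1_add: "\<alpha> \<in> cochains K G (-1) \<Longrightarrow> \<beta> \<in> cochains K G (-1) \<Longrightarrow>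
   cobdry K bC G bG (-1) (cochain_add K G (-1) \<alpha> \<beta>) =
   cochain_add K G 0 (cobdry K bC G bG (-1) \<alpha>) (cobdry K bC G bG (-1) \<beta>)"
  using cobdry_add[of \<alpha> "-1" \<beta>] by simp

lemma d0_add: "a \<in> cochains K G 0 \<Longrightarrow> b \<in> cochains K G 0 \<Longrightarrow>
   cobdry K bC G bG 0 (cochain_add K G 0 a b) =
   cochain_add K G 1 (cobdry K bC G bG 0 a) (cobdry K bC G bG 0 b)"
  using cobdry_add[of a 0 b] by simp

lemma d1_ghom: "group_hom (CG K G (-1)) (CG K G 0) (cobdry K bC G bG (-1))"
  unfolding group_hom_def group_hom_axioms_def
  using comm_group.axioms(2)[OF CG_group] d1_mem d1_add
  by (auto simp: hom_def CG_simps)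

lemma d0_ghom: "group_hom (CG K G 0) (CG K G 1) (cobdry K bC G bG 0)"
  unfolding group_hom_def group_hom_axioms_def
  using comm_group.axioms(2)[OF CG_group] d0_mem d0_add
  by (auto simp: hom_def CG_simps)

lemma d1_zero: "cobdry K bC G bG (-1) (czero K G (-1)) = czero K G 0"
  using group_hom.hom_one[OF d1_ghom] by (simp add: CG_simps)

lemma d1_inv: "\<alpha> \<in> cochains K G (-1) \<Longrightarrow>
  cobdry K bC G bG (-1) (inv\<^bsub>CG K G (-1)\<^esub> \<alpha>) = inv\<^bsub>CG K G 0\<^esub> (cobdry K bC G bG (-1) \<alpha>)"
  using group_hom.hom_inv[OF d1_ghom] by (simp add: CG_simps)

lemma shift_val: "shift_op K G \<gamma> a b = (if a \<in> cochains K G 0 \<and> b \<in> cochains K G 0 \<and> a = cochain_add K G 0 b \<gamma> then 1 else 0)"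
  unfolding shift_op_def ..

lemma gauge_val: "gauge_op K bC G bG \<rho> a b = (1 / of_nat (card (cochains K G (-1)))) *
   (\<Sum>\<alpha>\<in>cochains K G (-1). cnj (pairing K \<rho> \<alpha>) * shift_op K G (cobdry K bC G bG (-1) \<alpha>) a b)"
  unfolding gauge_op_def ..

lemma gauge_support:
  assumes "gauge_op K bC G bG \<rho> a c \<noteq> 0"
  shows "a \<in> cochains K G 0 \<and> c \<in> cochains K G 0 \<and> cobdry K bC G bG 0 a = cobdry K bC G bG 0 c"
proof (rule ccontr)
  assume ne: "\<not> ?thesis"
  have "shift_op K G (cobdry K bC G bG (-1) \<alpha>) a c = 0" if al: "\<alpha> \<in> cochains K G (-1)" for \<alpha>
  proof (rule ccontr)
    assume "shift_op K G (cobdry K bC G bG (-1) \<alpha>) a c \<noteq> 0"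
    then have ac: "a \<in> cochains K G 0" "c \<in> cochains K G 0" and e: "a = cochain_add K G 0 c (cobdry K bC G bG (-1) \<alpha>)"
      unfolding shift_val by (auto split: if_splits)
    have "cobdry K bC G bG 0 a = cochain_add K G 1 (cobdry K bC G bG 0 c) (czero K G 1)"
      unfolding e d0_add[OF ac(2) d1_mem[OF al]] dd0[OF al] ..
    also have "\<dots> = cobdry K bC G bG 0 c"
      using comm_group.axioms(2)[OF CG_group[of 1]] d0_mem[OF ac(2)]
      by (metis CG_simps monoid.r_one group.is_monoid)
    finally show False using ne ac by simp
  qed
  then have "gauge_op K bC G bG \<rho> a c = 0" unfolding gauge_val by simp
  then show False using assms by simp
qed

lemma commute:
  assumes w: "\<omega> \<in> cochains K G 1"
  shows "op_mult (cochains K G 0) (gauge_op K bC G bG \<rho>) (flux_op K bC G bG \<omega>)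
      = op_mult (cochains K G 0) (flux_op K bC G bG \<omega>) (gauge_op K bC G bG \<rho>)"
proof (intro ext)
  fix a c
  let ?A = "gauge_op K bC G bG \<rho>"
  have l: "op_mult (cochains K G 0) ?A (flux_op K bC G bG \<omega>) a c =
      (if c \<in> cochains K G 0 \<and> cobdry K bC G bG 0 c = \<omega> then ?A a c else 0)"
  proof -
    have "op_mult (cochains K G 0) ?A (flux_op K bC G bG \<omega>) a c =
       (\<Sum>b\<in>cochains K G 0. if b = c then (if c \<in> cochains K G 0 \<and> cobdry K bC G bG 0 c = \<omega> then ?A a c else 0) else 0)"
      unfolding op_mult_def flux_val[OF w] by (intro sum.cong refl) auto
    then show ?thesis using coch_finite by (simp add: sum.delta)
  qed
  have r: "op_mult (cochains K G 0) (flux_op K bC G bG \<omega>) ?A a c =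
      (if a \<in> cochains K G 0 \<and> cobdry K bC G bG 0 a = \<omega> then ?A a c else 0)"
  proof -
    have "op_mult (cochains K G 0) (flux_op K bC G bG \<omega>) ?A a c =
       (\<Sum>b\<in>cochains K G 0. if b = a then (if a \<in> cochains K G 0 \<and> cobdry K bC G bG 0 a = \<omega> then ?A a c else 0) else 0)"
      unfolding op_mult_def flux_val[OF w] by (intro sum.cong refl) auto
    then show ?thesis using coch_finite by (simp add: sum.delta')
  qed
  show "op_mult (cochains K G 0) ?A (flux_op K bC G bG \<omega>) a c = op_mult (cochains K G 0) (flux_op K bC G bG \<omega>) ?A a c"
    unfolding l r using gauge_support[of \<rho> a c] by auto
qed

lemma gauge_sum: "(\<lambda>a b. \<Sum>\<rho>\<in>hom_low K G (-1). gauge_op K bC G bG \<rho> a b) = op_id (cochains K G 0)"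
proof (intro ext)
  fix a b
  define N :: complex where "N = of_nat (card (cochains K G (-1)))"
  have N: "N \<noteq> 0" unfolding N_def using card_coch_pos by simp
  have "(\<Sum>\<rho>\<in>hom_low K G (-1). gauge_op K bC G bG \<rho> a b) =
     (1 / N) * (\<Sum>\<alpha>\<in>cochains K G (-1). (\<Sum>\<rho>\<in>hom_low K G (-1). cnj (pairing K \<rho> \<alpha>)) * shift_op K G (cobdry K bC G bG (-1) \<alpha>) a b)"
    unfolding gauge_val N_def[symmetric] sum_distrib_left[symmetric] sum_distrib_right
    by (rule arg_cong[where f="\<lambda>x. (1 / N) * x"], rule sum.swap)
  also have "\<dots> = (1 / N) * (\<Sum>\<alpha>\<in>cochains K G (-1). (if \<alpha> = czero K G (-1) then N * shift_op K G (czero K G 0) a b else 0))"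
  proof -
    have "(\<Sum>\<rho>\<in>hom_low K G (-1). cnj (pairing K \<rho> \<alpha>)) = (if \<alpha> = czero K G (-1) then N else 0)"
      if al: "\<alpha> \<in> cochains K G (-1)" for \<alpha>
      using arg_cong[OF sumR[OF al], of cnj] card_eq unfolding N_def by (simp flip: cnj_sum)
    then show ?thesis by (intro arg_cong[where f="\<lambda>x. (1 / N) * x"] sum.cong refl) (auto simp: d1_zero)
  qed
  also have "\<dots> = shift_op K G (czero K G 0) a b" using coch_finite czero_mem N by (simp add: sum.delta)
  also have "\<dots> = op_id (cochains K G 0) a b"
  proof -
    have "cochain_add K G 0 b (czero K G 0) = b" if "b \<in> cochains K G 0"
      using comm_group.axioms(2)[OF CG_group[of 0]] that
      by (metis CG_simps monoid.r_one group.is_monoid)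
    then show ?thesis unfolding shift_val op_id_def by auto
  qed
  finally show "(\<Sum>\<rho>\<in>hom_low K G (-1). gauge_op K bC G bG \<rho> a b) = op_id (cochains K G 0) a b" .
qed

end

context cx2 begin

lemma shift_cnj: "cnj (shift_op K G \<gamma> a b) = shift_op K G \<gamma> a b"
  unfolding shift_val by simp

lemma gauge_adj:
  assumes r: "\<rho> \<in> hom_low K G (-1)"
  shows "op_adj (gauge_op K bC G bG \<rho>) = gauge_op K bC G bG \<rho>"
proof (intro ext)
  fix a b
  interpret Cm: comm_group "CG K G (-1)" by (rule CG_group)
  interpret C0: comm_group "CG K G 0" by (rule CG_group)
  define N :: complex where "N = of_nat (card (cochains K G (-1)))"
  let ?d = "cobdry K bC G bG (-1)"
  let ?i = "\<lambda>\<alpha>. inv\<^bsub>CG K G (-1)\<^esub> \<alpha>"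
  have "op_adj (gauge_op K bC G bG \<rho>) a b =
      (1 / N) * (\<Sum>\<alpha>\<in>cochains K G (-1). pairing K \<rho> \<alpha> * shift_op K G (?d \<alpha>) b a)"
    unfolding op_adj_def gauge_val N_def by (simp add: shift_cnj)
  also have "(\<Sum>\<alpha>\<in>cochains K G (-1). pairing K \<rho> \<alpha> * shift_op K G (?d \<alpha>) b a) =
      (\<Sum>\<alpha>\<in>cochains K G (-1). pairing K \<rho> (?i \<alpha>) * shift_op K G (?d (?i \<alpha>)) b a)"
    by (rule sum.reindex_bij_witness[where i="?i" and j="?i"])
       (auto simp: CG_simps[symmetric] simp del: Cm.inv_closed intro: Cm.inv_closed)
  also have "\<dots> = (\<Sum>\<alpha>\<in>cochains K G (-1). cnj (pairing K \<rho> \<alpha>) * shift_op K G (?d \<alpha>) a b)"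
  proof (rule sum.cong[OF refl])
    fix \<alpha> assume al: "\<alpha> \<in> cochains K G (-1)"
    have c1: "pairing K \<rho> (?i \<alpha>) = cnj (pairing K \<rho> \<alpha>)"
      using Cm.ischar_inv[OF Cm.subgroup_self, of "pairing K \<rho>"] ischar_CG[OF r] al by (simp add: CG_simps)
    have dal: "?d \<alpha> \<in> carrier (CG K G 0)" using d1_mem[OF al] by (simp add: CG_simps)
    have c2: "shift_op K G (?d (?i \<alpha>)) b a = shift_op K G (?d \<alpha>) a b"
      unfolding d1_inv[OF al] shift_val
      using C0.inv_solve_right[of b a "?d \<alpha>"] dal by (auto simp: CG_simps)
    show "pairing K \<rho> (?i \<alpha>) * shift_op K G (?d (?i \<alpha>)) b a = cnj (pairing K \<rho> \<alpha>) * shift_op K G (?d \<alpha>) a b"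
      using c1 c2 by simp
  qed
  finally show "op_adj (gauge_op K bC G bG \<rho>) a b = gauge_op K bC G bG \<rho> a b"
    unfolding gauge_val N_def .
qed

lemma shift_comp:
  assumes g: "\<gamma> \<in> cochains K G 0" and g': "\<gamma>' \<in> cochains K G 0"
  shows "(\<Sum>b\<in>cochains K G 0. shift_op K G \<gamma> a b * shift_op K G \<gamma>' b c) = shift_op K G (cochain_add K G 0 \<gamma>' \<gamma>) a c"
proof (cases "c \<in> cochains K G 0")
  case False
  then show ?thesis unfolding shift_val by simp
next
  case True
  interpret C0: comm_group "CG K G 0" by (rule CG_group)
  define b0 where "b0 = cochain_add K G 0 c \<gamma>'"
  have b0: "b0 \<in> cochains K G 0" unfolding b0_def using add_mem[OF True g'] .
  have "(\<Sum>b\<in>cochains K G 0. shift_op K G \<gamma> a b * shift_op K G \<gamma>' b c) =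
      (\<Sum>b\<in>cochains K G 0. if b = b0 then shift_op K G \<gamma> a b0 else 0)"
    by (intro sum.cong refl) (auto simp: shift_val b0_def True)
  also have "\<dots> = shift_op K G \<gamma> a b0" using coch_finite b0 by (simp add: sum.delta')
  also have "\<dots> = shift_op K G (cochain_add K G 0 \<gamma>' \<gamma>) a c"
  proof -
    have "cochain_add K G 0 b0 \<gamma> = cochain_add K G 0 c (cochain_add K G 0 \<gamma>' \<gamma>)"
      unfolding b0_def using C0.m_assoc[of c \<gamma>' \<gamma>] True g g' by (simp add: CG_simps)
    then show ?thesis unfolding shift_val using b0 True by simp
  qed
  finally show ?thesis .
qed

lemma gauge_mult:
  assumes r: "\<rho> \<in> hom_low K G (-1)" and r': "\<rho>' \<in> hom_low K G (-1)"
  shows "op_mult (cochains K G 0) (gauge_op K bC G bG \<rho>) (gauge_op K bC G bG \<rho>') =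
    (if \<rho> = \<rho>' then gauge_op K bC G bG \<rho>' else op_zero)"
proof (intro ext)
  fix a c
  interpret Cm: comm_group "CG K G (-1)" by (rule CG_group)
  define N :: complex where "N = of_nat (card (cochains K G (-1)))"
  have N: "N \<noteq> 0" unfolding N_def using card_coch_pos by simp
  let ?d = "cobdry K bC G bG (-1)"
  let ?sh = "shift_op K G"
  let ?X = "cochains K G (-1)"
  let ?V = "cochains K G 0"
  define \<chi> where "\<chi> = pairing K \<rho>"
  define \<chi>' where "\<chi>' = pairing K \<rho>'"
  have pw: "gauge_op K bC G bG \<rho> a b * gauge_op K bC G bG \<rho>' b c = (1 / N * (1 / N)) *
     (\<Sum>\<alpha>\<in>?X. \<Sum>\<alpha>'\<in>?X. (cnj (\<chi> \<alpha>) * cnj (\<chi>' \<alpha>')) * (?sh (?d \<alpha>) a b * ?sh (?d \<alpha>') b c))" for b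
  proof -
    have "gauge_op K bC G bG \<rho> a b * gauge_op K bC G bG \<rho>' b c = (1 / N * (1 / N)) *
       ((\<Sum>\<alpha>\<in>?X. cnj (\<chi> \<alpha>) * ?sh (?d \<alpha>) a b) * (\<Sum>\<alpha>'\<in>?X. cnj (\<chi>' \<alpha>') * ?sh (?d \<alpha>') b c))"
      unfolding gauge_val N_def \<chi>_def \<chi>'_def by (simp add: mult_ac)
    also have "(\<Sum>\<alpha>\<in>?X. cnj (\<chi> \<alpha>) * ?sh (?d \<alpha>) a b) * (\<Sum>\<alpha>'\<in>?X. cnj (\<chi>' \<alpha>') * ?sh (?d \<alpha>') b c) =
       (\<Sum>\<alpha>\<in>?X. \<Sum>\<alpha>'\<in>?X. (cnj (\<chi> \<alpha>) * cnj (\<chi>' \<alpha>')) * (?sh (?d \<alpha>) a b * ?sh (?d \<alpha>') b c))"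
      unfolding sum_product by (intro sum.cong refl) (simp add: mult_ac)
    finally show ?thesis .
  qed
  have "op_mult ?V (gauge_op K bC G bG \<rho>) (gauge_op K bC G bG \<rho>') a c =
     (1 / N * (1 / N)) * (\<Sum>b\<in>?V. \<Sum>\<alpha>\<in>?X. \<Sum>\<alpha>'\<in>?X. (cnj (\<chi> \<alpha>) * cnj (\<chi>' \<alpha>')) * (?sh (?d \<alpha>) a b * ?sh (?d \<alpha>') b c))"
    unfolding op_mult_def pw by (simp add: sum_distrib_left)
  also have "(\<Sum>b\<in>?V. \<Sum>\<alpha>\<in>?X. \<Sum>\<alpha>'\<in>?X. (cnj (\<chi> \<alpha>) * cnj (\<chi>' \<alpha>')) * (?sh (?d \<alpha>) a b * ?sh (?d \<alpha>') b c)) =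
     (\<Sum>\<alpha>\<in>?X. \<Sum>\<alpha>'\<in>?X. (cnj (\<chi> \<alpha>) * cnj (\<chi>' \<alpha>')) * (\<Sum>b\<in>?V. ?sh (?d \<alpha>) a b * ?sh (?d \<alpha>') b c))"
    by (subst sum.swap, rule sum.cong[OF refl], subst sum.swap) (simp add: sum_distrib_left)
  also have "\<dots> = (\<Sum>\<alpha>\<in>?X. \<Sum>\<alpha>'\<in>?X. (cnj (\<chi> \<alpha>) * cnj (\<chi>' \<alpha>')) * ?sh (?d (cochain_add K G (-1) \<alpha>' \<alpha>)) a c)"
    by (intro sum.cong refl) (simp add: shift_comp d1_mem d1_add)
  also have "\<dots> = (\<Sum>\<alpha>\<in>?X. \<Sum>\<beta>\<in>?X. cnj (\<chi> \<alpha>) * (cnj (\<chi>' \<beta>) * \<chi>' \<alpha> * ?sh (?d \<beta>) a c))"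
  proof (rule sum.cong[OF refl])
    fix \<alpha> assume al: "\<alpha> \<in> ?X"
    let ?ia = "inv\<^bsub>CG K G (-1)\<^esub> \<alpha>"
    have ia: "?ia \<in> ?X" using Cm.inv_closed[of \<alpha>] al by (simp add: CG_simps)
    have ch: "cnj (\<chi>' (cochain_add K G (-1) \<beta> ?ia)) = cnj (\<chi>' \<beta>) * \<chi>' \<alpha>" if b: "\<beta> \<in> ?X" for \<beta>
    proof -
      have "\<chi>' ?ia = cnj (\<chi>' \<alpha>)"
        unfolding \<chi>'_def using Cm.ischar_inv[OF Cm.subgroup_self, of "pairing K \<rho>'"] ischar_CG[OF r'] al
        by (simp add: CG_simps)
      then show ?thesis unfolding \<chi>'_def using pairing_add[OF r' b ia] by simp
    qed
    have "(\<Sum>\<alpha>'\<in>?X. (cnj (\<chi> \<alpha>) * cnj (\<chi>' \<alpha>')) * ?sh (?d (cochain_add K G (-1) \<alpha>' \<alpha>)) a c) =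
        (\<Sum>\<beta>\<in>?X. (cnj (\<chi> \<alpha>) * cnj (\<chi>' (cochain_add K G (-1) \<beta> ?ia))) * ?sh (?d \<beta>) a c)"
    proof (rule sum.reindex_bij_witness[where j="\<lambda>x. cochain_add K G (-1) x \<alpha>" and i="\<lambda>y. cochain_add K G (-1) y ?ia"])
      fix x assume x: "x \<in> ?X"
      show "cochain_add K G (-1) (cochain_add K G (-1) x \<alpha>) ?ia = x"
        using x al Cm.m_assoc[of x \<alpha> ?ia] by (simp add: CG_simps[symmetric])
      show "cochain_add K G (-1) x \<alpha> \<in> ?X" using add_mem[OF x al] .
      show "(cnj (\<chi> \<alpha>) * cnj (\<chi>' (cochain_add K G (-1) (cochain_add K G (-1) x \<alpha>) ?ia))) *
          ?sh (?d (cochain_add K G (-1) x \<alpha>)) a c = (cnj (\<chi> \<alpha>) * cnj (\<chi>' x)) * ?sh (?d (cochain_add K G (-1) x \<alpha>)) a c"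
        using x al Cm.m_assoc[of x \<alpha> ?ia] by (simp add: CG_simps[symmetric])
    next
      fix y assume y: "y \<in> ?X"
      show "cochain_add K G (-1) (cochain_add K G (-1) y ?ia) \<alpha> = y"
        using y al Cm.m_assoc[of y ?ia \<alpha>] by (simp add: CG_simps[symmetric])
      show "cochain_add K G (-1) y ?ia \<in> ?X" using add_mem[OF y ia] .
    qed
    also have "\<dots> = (\<Sum>\<beta>\<in>?X. cnj (\<chi> \<alpha>) * (cnj (\<chi>' \<beta>) * \<chi>' \<alpha> * ?sh (?d \<beta>) a c))"
      by (intro sum.cong refl) (simp add: ch mult_ac)
    finally show "(\<Sum>\<alpha>'\<in>?X. (cnj (\<chi> \<alpha>) * cnj (\<chi>' \<alpha>')) * ?sh (?d (cochain_add K G (-1) \<alpha>' \<alpha>)) a c) =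
        (\<Sum>\<beta>\<in>?X. cnj (\<chi> \<alpha>) * (cnj (\<chi>' \<beta>) * \<chi>' \<alpha> * ?sh (?d \<beta>) a c))" .
  qed
  also have "\<dots> = (\<Sum>\<alpha>\<in>?X. cnj (\<chi> \<alpha>) * \<chi>' \<alpha>) * (\<Sum>\<beta>\<in>?X. cnj (\<chi>' \<beta>) * ?sh (?d \<beta>) a c)"
    unfolding sum_product by (intro sum.cong refl) (simp add: mult_ac)
  also have "(\<Sum>\<alpha>\<in>?X. cnj (\<chi> \<alpha>) * \<chi>' \<alpha>) = (if \<rho> = \<rho>' then N else 0)"
    unfolding \<chi>_def \<chi>'_def N_def by (rule orthX[OF r r'])
  finally show "op_mult ?V (gauge_op K bC G bG \<rho>) (gauge_op K bC G bG \<rho>') a c =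
    (if \<rho> = \<rho>' then gauge_op K bC G bG \<rho>' else op_zero) a c"
    unfolding op_zero_def gauge_val N_def[symmetric] \<chi>'_def using N by simp
qed

end

theorem mainTheorem5:
  fixes K :: "int \<Rightarrow> 'k set" and bC :: "int \<Rightarrow> 'k \<Rightarrow> 'k \<Rightarrow> int"
    and G :: "int \<Rightarrow> ('g, 'm) monoid_scheme" and bG :: "int \<Rightarrow> 'g \<Rightarrow> 'g"
  assumes K_fin: "\<And>n. finite (K n)"
    and K_supp: "finite {n. K n \<noteq> {}}"
    and C_chain: "\<And>n x z. x \<in> K n \<Longrightarrow> z \<in> K (n - 2) \<Longrightarrow>
                   (\<Sum>y\<in>K (n - 1). bC n x y * bC (n - 1) y z) = 0"
    and G_grp: "\<And>n. comm_group (G n)"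
    and G_fin: "\<And>n. finite (carrier (G n))"
    and bG_hom: "\<And>n. bG n \<in> hom (G n) (G (n - 1))"
    and G_chain: "\<And>n g. g \<in> carrier (G n) \<Longrightarrow> bG (n - 1) (bG n g) = \<one>\<^bsub>G (n - 2)\<^esub>"
  shows
   "(\<forall>\<rho>\<in>hom_low K G (-1). \<forall>\<omega>\<in>cochains K G 1.
        op_mult (cochains K G 0) (gauge_op K bC G bG \<rho>) (flux_op K bC G bG \<omega>)
      = op_mult (cochains K G 0) (flux_op K bC G bG \<omega>) (gauge_op K bC G bG \<rho>))
  \<and> (\<forall>\<rho>\<in>hom_low K G (-1). op_adj (gauge_op K bC G bG \<rho>) = gauge_op K bC G bG \<rho>)
  \<and> (\<forall>\<omega>\<in>cochains K G 1. op_adj (flux_op K bC G bG \<omega>) = flux_op K bC G bG \<omega>)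
  \<and> (\<forall>\<rho>\<in>hom_low K G (-1). \<forall>\<rho>'\<in>hom_low K G (-1).
        op_mult (cochains K G 0) (gauge_op K bC G bG \<rho>) (gauge_op K bC G bG \<rho>')
      = (if \<rho> = \<rho>' then gauge_op K bC G bG \<rho>' else op_zero))
  \<and> (\<forall>\<omega>\<in>cochains K G 1. \<forall>\<omega>'\<in>cochains K G 1.
        op_mult (cochains K G 0) (flux_op K bC G bG \<omega>) (flux_op K bC G bG \<omega>')
      = (if \<omega> = \<omega>' then flux_op K bC G bG \<omega>' else op_zero))
  \<and> (\<lambda>a b. \<Sum>\<rho>\<in>hom_low K G (-1). gauge_op K bC G bG \<rho> a b) = op_id (cochains K G 0)
  \<and> (\<lambda>a b. \<Sum>\<omega>\<in>cochains K G 1. flux_op K bC G bG \<omega> a b) = op_id (cochains K G 0)"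
proof -
  interpret c: cx2 K G bC bG
  proof (rule cx2.intro)
    show "cx K G" by (rule cx.intro) (fact K_fin K_supp G_grp G_fin)+
    show "cx2_axioms K G bC bG" by (rule cx2_axioms.intro) (fact C_chain bG_hom G_chain)+
  qed
  show ?thesis
    using c.commute c.gauge_adj c.flux_adj c.gauge_mult c.flux_mult c.gauge_sum c.flux_sum
    by blast
qed

end
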